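(* Let $p$ be an odd prime and let $G_p=W_p/Z(W_p)$, where $W_p=C_2\wr C_p$. Then $\mathrm{diam}_{\max}(G_p)\le \frac{13}{2}(p-1)$.
   Context: The wreath product $W_p=C_2\wr C_p$ is $U\rtimes C_p$ with $U=\mathbb{F}_2^{\,p}$ and a generator of the cyclic group $C_p$ acting by cyclically permuting coordinates. Its center is $Z(W_p)=\{(0,\dots,0),(1,\dots,1)\}$ (of order 2), so $G_p=V\rtimes C$ where $V=U/Z(W_p)$ has dimension $p-1$ over $\mathbb{F}_2$ and $C$ is cyclic of order $p$. For a finite group $G$ and generating set $X$, $\mathrm{diam}(G,X)$ is the smallest $k$ such that every element of $G$ is a product of at most $k$ elements of $X\cup X^{-1}$ (the diameter of the undirected Cayley graph), and $\mathrm{diam}_{\max}(G)=\max\{\mathrm{diam}(G,X): X\subseteq G,\ \langle X\rangle=G\}$. *)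

theory Defs
  imports Complex_Main "HOL-Algebra.Coset" "HOL-Algebra.Generated_Groups" "HOL-Computational_Algebra.Primes"
begin

text \<open>Cyclic shift of coordinates of a vector in F_2^p (vectors are functions
  nat => bool, with value False outside {0..<p}); a in C_p acts by shifting by a.\<close>
definition cshift :: "nat \<Rightarrow> nat \<Rightarrow> (nat \<Rightarrow> bool) \<Rightarrow> (nat \<Rightarrow> bool)" where
  "cshift p a v = (\<lambda>i. if i < p then v ((i + p - a mod p) mod p) else False)"

definition wreath_mult :: "nat \<Rightarrow> (nat \<Rightarrow> bool) \<times> nat \<Rightarrow> (nat \<Rightarrow> bool) \<times> nat \<Rightarrow> (nat \<Rightarrow> bool) \<times> nat" where
  "wreath_mult p x y = ((\<lambda>i. fst x i \<noteq> cshift p (snd x) (fst y) i), (snd x + snd y) mod p)"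

definition wreath :: "nat \<Rightarrow> ((nat \<Rightarrow> bool) \<times> nat) monoid" where
  "wreath p = \<lparr> carrier = {x. (\<forall>i\<ge>p. fst x i = False) \<and> snd x < p},
      monoid.mult = wreath_mult p, one = ((\<lambda>_. False), 0) \<rparr>"

definition group_center :: "('a, 'b) monoid_scheme \<Rightarrow> 'a set" where
  "group_center G = {z \<in> carrier G. \<forall>g \<in> carrier G. z \<otimes>\<^bsub>G\<^esub> g = g \<otimes>\<^bsub>G\<^esub> z}"

definition Gp :: "nat \<Rightarrow> ((nat \<Rightarrow> bool) \<times> nat) set monoid" where
  "Gp p = wreath p Mod group_center (wreath p)"

definition word_prod :: "('a, 'b) monoid_scheme \<Rightarrow> 'a list \<Rightarrow> 'a" where
  "word_prod G ws = foldr (\<lambda>x y. x \<otimes>\<^bsub>G\<^esub> y) ws \<one>\<^bsub>G\<^esub>"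

definition cayley_diam :: "('a, 'b) monoid_scheme \<Rightarrow> 'a set \<Rightarrow> nat" where
  "cayley_diam G S = (LEAST k. \<forall>g \<in> carrier G. \<exists>ws.
      set ws \<subseteq> S \<union> m_inv G ` S \<and> length ws \<le> k \<and> g = word_prod G ws)"

definition diam_max :: "('a, 'b) monoid_scheme \<Rightarrow> nat" where
  "diam_max G = Sup {cayley_diam G S | S. S \<subseteq> carrier G \<and> generate G S = carrier G}"

end

theory Submission
  imports Defs "HOL-Library.Z2" "HOL-Library.Function_Algebras"
begin


lemma int_modsub:
  fixes p i a :: nat
  assumes "0 < p"
  shows "int ((i + p - a mod p) mod p) = (int i - int a) mod int p"
proof -
  have le: "a mod p \<le> i + p" using assms by (meson mod_le_divisor trans_le_add2)
  have "int ((i + p - a mod p) mod p) = (int i + int p - int (a mod p)) mod int p"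
    using le by (simp add: zmod_int of_nat_diff)
  also have "\<dots> = (int i - int (a mod p)) mod int p"
    by (metis add.commute add_diff_eq mod_add_self1)
  also have "\<dots> = (int i - int a) mod int p"
    by (simp add: zmod_int mod_diff_right_eq)
  finally show ?thesis .
qed

declare add_bit_eq_xor[simp del] mult_bit_eq_and[simp del]

lemma modsub_comp:
  fixes p i a b :: nat
  assumes "0 < p"
  shows "((i + p - a mod p) mod p + p - b mod p) mod p = (i + p - (a + b) mod p) mod p"
proof -
  have "int (((i + p - a mod p) mod p + p - b mod p) mod p) = (int ((i + p - a mod p) mod p) - int b) mod int p"
    using int_modsub[OF assms] by blast
  also have "\<dots> = ((int i - int a) mod int p - int b) mod int p" using int_modsub[OF assms] by simp
  also have "\<dots> = (int i - int a - int b) mod int p" by (simp add: mod_diff_left_eq)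
  also have "\<dots> = int ((i + p - (a + b) mod p) mod p)" using int_modsub[OF assms, of i "a+b"] by (simp add: algebra_simps)
  finally show ?thesis by linarith
qed

lemma cshift_comp: "0 < p \<Longrightarrow> cshift p a (cshift p b v) = cshift p (a + b) v"
  by (auto simp: cshift_def modsub_comp fun_eq_iff)

lemma cshift_mod: "cshift p (a mod p) v = cshift p a v"
  by (simp add: cshift_def)

lemma cshift_id: "0 < p \<Longrightarrow> \<forall>i\<ge>p. \<not> v i \<Longrightarrow> a mod p = 0 \<Longrightarrow> cshift p a v = v"
  by (auto simp: cshift_def fun_eq_iff)

lemma cshift_xor: "cshift p a (\<lambda>i. f i \<noteq> g i) = (\<lambda>i. cshift p a f i \<noteq> cshift p a g i)"
  by (auto simp: cshift_def fun_eq_iff)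

lemma cshift_supp: "i \<ge> p \<Longrightarrow> \<not> cshift p a v i"
  by (simp add: cshift_def)

definition emb :: "(nat \<Rightarrow> bool) \<Rightarrow> nat \<Rightarrow> bit" where
  "emb f = (\<lambda>i. of_bool (f i))"

definition sh :: "nat \<Rightarrow> nat \<Rightarrow> (nat \<Rightarrow> bit) \<Rightarrow> nat \<Rightarrow> bit" where
  "sh p a e = (\<lambda>i. if i < p then e ((i + p - a mod p) mod p) else 0)"

lemma sh_comp: "0 < p \<Longrightarrow> sh p a (sh p b v) = sh p (a + b) v"
  by (auto simp: sh_def modsub_comp fun_eq_iff)

lemma sh_mod: "sh p (a mod p) v = sh p a v"
  unfolding sh_def by (simp only: mod_mod_trivial)

lemma sh_add: "sh p a (e + e') = sh p a e + sh p a e'"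
  by (auto simp: sh_def fun_eq_iff)

lemma sh_zero[simp]: "sh p a 0 = 0"
  by (auto simp: sh_def fun_eq_iff)

lemma sh_sum: "sh p a (sum F A) = (\<Sum>x\<in>A. sh p a (F x))"
proof (induction A rule: infinite_finite_induct)
  case (infinite A)
  then show ?case by (metis sh_zero sum.infinite)
next
  case empty
  then show ?case by (metis sh_zero sum.empty)
next
  case (insert x F)
  then show ?case by (metis sh_add sum.insert)
qed

lemma emb_cshift: "emb (cshift p a f) = sh p a (emb f)"
  by (auto simp: emb_def sh_def cshift_def fun_eq_iff)

lemma bit_of_bool_xor: "(of_bool (x \<noteq> y) :: bit) = of_bool x + of_bool y"
  by (cases x; cases y) auto

lemma emb_xor: "emb (\<lambda>i. f i \<noteq> g i) = emb f + emb g"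
  by (simp add: emb_def fun_eq_iff bit_of_bool_xor)

lemma emb_inj: "emb f = emb g \<Longrightarrow> f = g"
  unfolding emb_def fun_eq_iff by (metis of_bool_eq_iff)

lemma bit_add_self[simp]: "(x::bit) + x = 0"
  by (cases x) auto

lemma fun_bit_add_self[simp]: "(e::nat\<Rightarrow>bit) + e = 0"
  by (simp add: fun_eq_iff)


lemma wcarrier: "x \<in> carrier (wreath p) \<longleftrightarrow> (\<forall>i\<ge>p. \<not> fst x i) \<and> snd x < p"
  by (simp add: wreath_def)

lemma wmult: "x \<otimes>\<^bsub>wreath p\<^esub> y = ((\<lambda>i. fst x i \<noteq> cshift p (snd x) (fst y) i), (snd x + snd y) mod p)"
  by (simp add: wreath_def wreath_mult_def)

lemma wone: "\<one>\<^bsub>wreath p\<^esub> = ((\<lambda>_. False), 0)"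
  by (simp add: wreath_def)

lemma wreath_group: assumes p: "0 < p" shows "group (wreath p)"
proof (rule groupI)
  fix x y assume "x \<in> carrier (wreath p)" "y \<in> carrier (wreath p)"
  then show "x \<otimes>\<^bsub>wreath p\<^esub> y \<in> carrier (wreath p)"
    using p by (simp add: wcarrier wmult cshift_supp)
next
  show "\<one>\<^bsub>wreath p\<^esub> \<in> carrier (wreath p)" using p by (simp add: wcarrier wone)
next
  fix x y z assume "x \<in> carrier (wreath p)" "y \<in> carrier (wreath p)" "z \<in> carrier (wreath p)"
  have "cshift p (snd x) (\<lambda>i. fst y i \<noteq> cshift p (snd y) (fst z) i)
     = (\<lambda>i. cshift p (snd x) (fst y) i \<noteq> cshift p ((snd x + snd y) mod p) (fst z) i)"
    by (simp only: cshift_xor cshift_comp[OF p] cshift_mod)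
  moreover have "(((snd x + snd y) mod p) + snd z) mod p = (snd x + (snd y + snd z) mod p) mod p"
    by (simp add: mod_add_left_eq mod_add_right_eq add.assoc)
  ultimately show "x \<otimes>\<^bsub>wreath p\<^esub> y \<otimes>\<^bsub>wreath p\<^esub> z = x \<otimes>\<^bsub>wreath p\<^esub> (y \<otimes>\<^bsub>wreath p\<^esub> z)"
    by (auto simp add: wmult fun_eq_iff)
next
  fix x assume "x \<in> carrier (wreath p)"
  then show "\<one>\<^bsub>wreath p\<^esub> \<otimes>\<^bsub>wreath p\<^esub> x = x"
    using p by (auto simp add: wcarrier wmult wone cshift_id prod_eq_iff)
next
  fix x assume x: "x \<in> carrier (wreath p)"
  define y where "y = (cshift p (p - snd x) (fst x), (p - snd x) mod p)"
  have "y \<in> carrier (wreath p)" using p by (simp add: y_def wcarrier cshift_supp)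
  moreover have "y \<otimes>\<^bsub>wreath p\<^esub> x = \<one>\<^bsub>wreath p\<^esub>"
  proof -
    have "((p - snd x) mod p + snd x) mod p = 0"
      using x by (simp add: wcarrier mod_add_left_eq)
    then show ?thesis using x by (simp add: y_def wmult wone cshift_mod wcarrier)
  qed
  ultimately show "\<exists>y\<in>carrier (wreath p). y \<otimes>\<^bsub>wreath p\<^esub> x = \<one>\<^bsub>wreath p\<^esub>" by blast
qed


lemma center_normal: fixes G (structure) assumes G: "group G" shows "normal (group_center G) G"
proof -
  interpret group G by (rule G)
  have sub: "subgroup (group_center G) G"
  proof (rule subgroupI)
    show "group_center G \<subseteq> carrier G" unfolding group_center_def by blast
    have "\<one> \<in> group_center G" unfolding group_center_def by simp
    then show "group_center G \<noteq> {}" by blast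
  next
    fix a assume a: "a \<in> group_center G"
    then have ac: "a \<in> carrier G" and ha: "\<And>x. x \<in> carrier G \<Longrightarrow> a \<otimes> x = x \<otimes> a"
      unfolding group_center_def by blast+
    have "inv a \<otimes> g = g \<otimes> inv a" if g: "g \<in> carrier G" for g
    proof -
      have e: "a \<otimes> g = g \<otimes> a" using ha g by blast
      have "inv a \<otimes> g = inv a \<otimes> (g \<otimes> a) \<otimes> inv a" using ac g by (simp add: m_assoc)
      also have "\<dots> = inv a \<otimes> (a \<otimes> g) \<otimes> inv a" by (simp only: e)
      also have "\<dots> = g \<otimes> inv a" using ac g by (simp add: m_assoc[symmetric])
      finally show ?thesis .
    qed
    then show "inv a \<in> group_center G" using ac unfolding group_center_def by simp
  next
    fix a b assume a: "a \<in> group_center G" and b: "b \<in> group_center G"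
    then have ac: "a \<in> carrier G" and ha: "\<And>x. x \<in> carrier G \<Longrightarrow> a \<otimes> x = x \<otimes> a"
      and bc: "b \<in> carrier G" and hb: "\<And>x. x \<in> carrier G \<Longrightarrow> b \<otimes> x = x \<otimes> b"
      unfolding group_center_def by blast+
    have "a \<otimes> b \<otimes> g = g \<otimes> (a \<otimes> b)" if g: "g \<in> carrier G" for g
    proof -
      have e1: "b \<otimes> g = g \<otimes> b" using hb g by blast
      have e2: "a \<otimes> g = g \<otimes> a" using ha g by blast
      have "a \<otimes> b \<otimes> g = a \<otimes> (b \<otimes> g)" using ac bc g by (simp only: m_assoc)
      also have "\<dots> = (a \<otimes> g) \<otimes> b" using ac bc g by (simp only: e1 m_assoc)
      also have "\<dots> = g \<otimes> (a \<otimes> b)" using ac bc g by (simp only: e2 m_assoc)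
      finally show ?thesis .
    qed
    then show "a \<otimes> b \<in> group_center G" using ac bc unfolding group_center_def by simp
  qed
  show ?thesis
  proof (rule normal_inv_iff[THEN iffD2], intro conjI sub ballI)
    fix x h assume x: "x \<in> carrier G" and h: "h \<in> group_center G"
    then have hc: "h \<in> carrier G" and e: "x \<otimes> h = h \<otimes> x" unfolding group_center_def by auto
    have "x \<otimes> h \<otimes> inv x = h \<otimes> x \<otimes> inv x" by (simp only: e)
    also have "\<dots> = h" using hc x by (simp add: m_assoc)
    finally show "x \<otimes> h \<otimes> inv x \<in> group_center G" using h by simp
  qed
qed

definition onesw :: "nat \<Rightarrow> (nat \<Rightarrow> bool) \<times> nat" where
  "onesw p = ((\<lambda>i. i < p), 0)"

lemma onesw_center: assumes p: "0 < p" shows "onesw p \<in> group_center (wreath p)"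
  unfolding group_center_def
proof (intro CollectI conjI ballI)
  show "onesw p \<in> carrier (wreath p)" by (simp add: onesw_def wcarrier p)
  fix g assume g: "g \<in> carrier (wreath p)"
  have "cshift p (snd g) (\<lambda>i. i < p) = (\<lambda>i. i < p)"
    using p by (auto simp: cshift_def)
  then show "onesw p \<otimes>\<^bsub>wreath p\<^esub> g = g \<otimes>\<^bsub>wreath p\<^esub> onesw p"
    using g p by (auto simp: onesw_def wmult wcarrier cshift_id fun_eq_iff)
qed

lemma center_snd: assumes p: "0 < p" and z: "z \<in> group_center (wreath p)" shows "snd z = 0"
proof (rule ccontr)
  assume nz: "snd z \<noteq> 0"
  have zc: "snd z < p" using z by (simp add: group_center_def wcarrier)
  define e where "e = ((\<lambda>i::nat. i = 0), 0::nat)"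
  have ec: "e \<in> carrier (wreath p)" using p by (simp add: e_def wcarrier)
  have "z \<otimes>\<^bsub>wreath p\<^esub> e = e \<otimes>\<^bsub>wreath p\<^esub> z" using z ec by (simp add: group_center_def)
  then have "fst (z \<otimes>\<^bsub>wreath p\<^esub> e) (snd z) = fst (e \<otimes>\<^bsub>wreath p\<^esub> z) (snd z)" by simp
  moreover have "cshift p (snd z) (\<lambda>i. i = 0) (snd z)" using zc by (simp add: cshift_def)
  moreover have "cshift p 0 (fst z) (snd z) = fst z (snd z)" using zc by (simp add: cshift_def)
  ultimately show False using nz by (simp add: wmult e_def)
qed


context fixes p :: nat assumes p0: "0 < p"
begin

lemma Wgroup: "group (wreath p)" by (rule wreath_group[OF p0])

lemma Znormal: "normal (group_center (wreath p)) (wreath p)"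
  by (rule center_normal[OF Wgroup])

lemma gen_lift:
  assumes Ksub: "K \<subseteq> carrier (wreath p)"
    and Kone: "\<one>\<^bsub>wreath p\<^esub> \<in> K"
    and Kmult: "\<And>a b. a \<in> K \<Longrightarrow> b \<in> K \<Longrightarrow> a \<otimes>\<^bsub>wreath p\<^esub> b \<in> K"
    and Kinv: "\<And>a. a \<in> K \<Longrightarrow> inv\<^bsub>wreath p\<^esub> a \<in> K"
    and SK: "\<And>s. s \<in> S \<Longrightarrow> \<exists>k\<in>K. s = group_center (wreath p) #>\<^bsub>wreath p\<^esub> k"
    and h: "h \<in> generate (Gp p) S"
  shows "\<exists>k\<in>K. h = group_center (wreath p) #>\<^bsub>wreath p\<^esub> k"
  using h
proof (induction rule: generate.induct)
  case one
  have "group_center (wreath p) #>\<^bsub>wreath p\<^esub> \<one>\<^bsub>wreath p\<^esub> = group_center (wreath p)"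
    using Znormal group.coset_mult_one[OF Wgroup] normal_imp_subgroup subgroup.subset by metis
  then show ?case using Kone by (auto simp: Gp_def)
next
  case (incl h)
  then show ?case using SK by blast
next
  case (inv h)
  then obtain k where k: "k \<in> K" "h = group_center (wreath p) #>\<^bsub>wreath p\<^esub> k" using SK by blast
  have kc: "k \<in> carrier (wreath p)" using k Ksub by blast
  have hc: "h \<in> carrier (Gp p)" unfolding Gp_def using k kc by (simp add: carrier_FactGroup)
  have "inv\<^bsub>Gp p\<^esub> h = set_inv\<^bsub>wreath p\<^esub> h"
    using normal.inv_FactGroup[OF Znormal] hc by (simp add: Gp_def)
  also have "\<dots> = group_center (wreath p) #>\<^bsub>wreath p\<^esub> inv\<^bsub>wreath p\<^esub> k"
    using normal.rcos_inv[OF Znormal kc] k by simp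
  finally show ?case using Kinv k by blast
next
  case (eng h1 h2)
  then obtain k1 k2 where k: "k1 \<in> K" "h1 = group_center (wreath p) #>\<^bsub>wreath p\<^esub> k1"
     "k2 \<in> K" "h2 = group_center (wreath p) #>\<^bsub>wreath p\<^esub> k2" by blast
  have "h1 \<otimes>\<^bsub>Gp p\<^esub> h2 = group_center (wreath p) #>\<^bsub>wreath p\<^esub> (k1 \<otimes>\<^bsub>wreath p\<^esub> k2)"
  proof -
    have "k1 \<in> carrier (wreath p)" "k2 \<in> carrier (wreath p)" using k Ksub by auto
    then show ?thesis using normal.rcos_sum[OF Znormal] k by (simp add: Gp_def)
  qed
  then show ?case using Kmult k by blast
qed

lemma word_lift:
  assumes "set ws \<subseteq> carrier (wreath p)"
  shows "word_prod (Gp p) (map (\<lambda>x. group_center (wreath p) #>\<^bsub>wreath p\<^esub> x) ws)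
       = group_center (wreath p) #>\<^bsub>wreath p\<^esub> word_prod (wreath p) ws"
  using assms
proof (induction ws)
  case Nil
  have "group_center (wreath p) #>\<^bsub>wreath p\<^esub> \<one>\<^bsub>wreath p\<^esub> = group_center (wreath p)"
    using Znormal group.coset_mult_one[OF Wgroup] normal_imp_subgroup subgroup.subset by metis
  then show ?case by (simp add: word_prod_def Gp_def)
next
  case (Cons a ws)
  have wc: "word_prod (wreath p) ws \<in> carrier (wreath p)"
    using Cons.prems
  proof (induction ws)
    case Nil then show ?case using group.is_monoid[OF Wgroup] by (simp add: word_prod_def)
  next
    case (Cons b ws) then show ?case using group.is_monoid[OF Wgroup] by (simp add: word_prod_def monoid.m_closed)
  qed
  have "word_prod (Gp p) (map (\<lambda>x. group_center (wreath p) #>\<^bsub>wreath p\<^esub> x) (a # ws))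
     = (group_center (wreath p) #>\<^bsub>wreath p\<^esub> a) <#>\<^bsub>wreath p\<^esub> (group_center (wreath p) #>\<^bsub>wreath p\<^esub> word_prod (wreath p) ws)"
    using Cons by (simp add: word_prod_def Gp_def)
  also have "\<dots> = group_center (wreath p) #>\<^bsub>wreath p\<^esub> word_prod (wreath p) (a # ws)"
    using normal.rcos_sum[OF Znormal] Cons.prems wc by (simp add: word_prod_def)
  finally show ?case .
qed

end


definition vv :: "(nat \<Rightarrow> bool) \<Rightarrow> (nat \<Rightarrow> bool) \<times> nat" where "vv u = (u, 0)"
definition sp :: "nat \<Rightarrow> (nat \<Rightarrow> bool) \<Rightarrow> bool" where "sp p u = (\<forall>i\<ge>p. \<not> u i)"
definition xr :: "(nat \<Rightarrow> bool) \<Rightarrow> (nat \<Rightarrow> bool) \<Rightarrow> nat \<Rightarrow> bool" where "xr u v = (\<lambda>i. u i \<noteq> v i)"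

lemma sum_fun_apply: "sum F A i = (\<Sum>x\<in>A. F x i)"
  by (induction A rule: infinite_finite_induct) auto

lemma sp_xr: "sp p u \<Longrightarrow> sp p v \<Longrightarrow> sp p (xr u v)" by (simp add: sp_def xr_def)
lemma sp_cshift: "sp p (cshift p a u)" by (simp add: sp_def cshift_def)
lemma emb_xr: "emb (xr u v) = emb u + emb v" unfolding xr_def by (rule emb_xor)
lemma sp_fst: "x \<in> carrier (wreath p) \<Longrightarrow> sp p (fst x)" by (simp add: sp_def wcarrier)

context fixes p :: nat assumes p0: "0 < p"
begin

lemma vv_carrier: "sp p u \<Longrightarrow> vv u \<in> carrier (wreath p)"
  using p0 by (simp add: vv_def sp_def wcarrier)

lemma vv_mult: "sp p u' \<Longrightarrow> vv u \<otimes>\<^bsub>wreath p\<^esub> vv u' = vv (xr u u')"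
  using p0 by (simp add: vv_def wmult xr_def cshift_id sp_def)

lemma vv_inv: "sp p u \<Longrightarrow> inv\<^bsub>wreath p\<^esub> (vv u) = vv u"
proof -
  assume u: "sp p u"
  have "vv u \<otimes>\<^bsub>wreath p\<^esub> vv u = \<one>\<^bsub>wreath p\<^esub>" using vv_mult[OF u] by (simp add: vv_def xr_def wone)
  then show ?thesis using group.inv_equality[OF Wgroup[OF p0]] vv_carrier[OF u] by blast
qed

lemma t_vv: "t \<in> carrier (wreath p) \<Longrightarrow> sp p u \<Longrightarrow>
   t \<otimes>\<^bsub>wreath p\<^esub> vv u = vv (cshift p (snd t) u) \<otimes>\<^bsub>wreath p\<^esub> t"
  using p0 by (auto simp: vv_def wmult wcarrier cshift_id fun_eq_iff)

lemma pow_snd: "t \<in> carrier (wreath p) \<Longrightarrow> snd (t [^]\<^bsub>wreath p\<^esub> (j::nat)) = (j * snd t) mod p"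
proof (induction j)
  case 0 then show ?case by (simp add: wone)
next
  case (Suc j) then show ?case by (simp add: wmult) (metis mod_add_right_eq add.commute)
qed

lemma pow_vv: assumes t: "t \<in> carrier (wreath p)" and u: "sp p u"
  shows "t [^]\<^bsub>wreath p\<^esub> (j::nat) \<otimes>\<^bsub>wreath p\<^esub> vv u = vv (cshift p (j * snd t) u) \<otimes>\<^bsub>wreath p\<^esub> t [^]\<^bsub>wreath p\<^esub> j"
  using u
proof (induction j arbitrary: u)
  case 0
  interpret W: group "wreath p" by (rule Wgroup[OF p0])
  have "cshift p 0 u = u" using 0 p0 by (simp add: cshift_id sp_def)
  then show ?case using vv_carrier[OF 0] by simp
next
  case (Suc j)
  interpret W: group "wreath p" by (rule Wgroup[OF p0])
  have tj: "t [^]\<^bsub>wreath p\<^esub> j \<in> carrier (wreath p)" using t by simp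
  have s1: "sp p (cshift p (snd t) u)" by (rule sp_cshift)
  have "t [^]\<^bsub>wreath p\<^esub> Suc j \<otimes>\<^bsub>wreath p\<^esub> vv u = t [^]\<^bsub>wreath p\<^esub> j \<otimes>\<^bsub>wreath p\<^esub> (t \<otimes>\<^bsub>wreath p\<^esub> vv u)"
    using t tj vv_carrier[OF Suc.prems] by (simp add: W.m_assoc)
  also have "\<dots> = t [^]\<^bsub>wreath p\<^esub> j \<otimes>\<^bsub>wreath p\<^esub> vv (cshift p (snd t) u) \<otimes>\<^bsub>wreath p\<^esub> t"
    using t tj vv_carrier s1 by (simp add: t_vv[OF t Suc.prems] W.m_assoc)
  also have "\<dots> = vv (cshift p (j * snd t) (cshift p (snd t) u)) \<otimes>\<^bsub>wreath p\<^esub> t [^]\<^bsub>wreath p\<^esub> j \<otimes>\<^bsub>wreath p\<^esub> t"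
    using Suc.IH[OF s1] by simp
  also have "\<dots> = vv (cshift p (Suc j * snd t) u) \<otimes>\<^bsub>wreath p\<^esub> t [^]\<^bsub>wreath p\<^esub> Suc j"
    using t tj vv_carrier sp_cshift by (simp add: W.m_assoc cshift_comp[OF p0] add.commute)
  finally show ?case .
qed

lemma winv: assumes h: "h \<in> carrier (wreath p)"
  shows "inv\<^bsub>wreath p\<^esub> h = (cshift p (p - snd h) (fst h), (p - snd h) mod p)"
proof -
  define y where "y = (cshift p (p - snd h) (fst h), (p - snd h) mod p)"
  have "y \<in> carrier (wreath p)" using p0 by (simp add: y_def wcarrier cshift_supp)
  moreover have "((p - snd h) mod p + snd h) mod p = 0"
    using h by (simp add: wcarrier mod_add_left_eq)
  then have "y \<otimes>\<^bsub>wreath p\<^esub> h = \<one>\<^bsub>wreath p\<^esub>" using h by (simp add: y_def wmult wone cshift_mod wcarrier)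
  ultimately show ?thesis using group.inv_equality[OF Wgroup[OF p0]] h y_def by blast
qed

lemma snd_mult_inv: assumes g: "g \<in> carrier (wreath p)" and h: "h \<in> carrier (wreath p)" and e: "snd g = snd h"
  shows "snd (g \<otimes>\<^bsub>wreath p\<^esub> inv\<^bsub>wreath p\<^esub> h) = 0"
proof -
  have "(snd h + (p - snd h) mod p) mod p = 0" using h by (simp add: wcarrier mod_add_right_eq)
  then show ?thesis using e by (simp add: winv[OF h] wmult)
qed

lemma decomp_vv: assumes g: "g \<in> carrier (wreath p)" and h: "h \<in> carrier (wreath p)" and e: "snd g = snd h"
  shows "g = vv (fst (g \<otimes>\<^bsub>wreath p\<^esub> inv\<^bsub>wreath p\<^esub> h)) \<otimes>\<^bsub>wreath p\<^esub> h"
proof -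
  interpret W: group "wreath p" by (rule Wgroup[OF p0])
  have "vv (fst (g \<otimes>\<^bsub>wreath p\<^esub> inv\<^bsub>wreath p\<^esub> h)) = g \<otimes>\<^bsub>wreath p\<^esub> inv\<^bsub>wreath p\<^esub> h"
    using snd_mult_inv[OF g h e] by (simp add: vv_def prod_eq_iff)
  then show ?thesis using g h by (simp add: W.m_assoc)
qed

lemma commute_cshift: assumes t: "t \<in> carrier (wreath p)" and h: "h \<in> carrier (wreath p)"
   and s: "snd h = 0" and c: "h \<otimes>\<^bsub>wreath p\<^esub> t = t \<otimes>\<^bsub>wreath p\<^esub> h"
  shows "cshift p (snd t) (fst h) = fst h"
proof -
  interpret W: group "wreath p" by (rule Wgroup[OF p0])
  have hv: "h = vv (fst h)" using s by (simp add: vv_def prod_eq_iff)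
  have "vv (fst h) \<otimes>\<^bsub>wreath p\<^esub> t = vv (cshift p (snd t) (fst h)) \<otimes>\<^bsub>wreath p\<^esub> t"
    using c t_vv[OF t sp_fst[OF h]] hv by metis
  then have "vv (fst h) = vv (cshift p (snd t) (fst h))"
    using W.right_cancel t vv_carrier sp_fst[OF h] sp_cshift by metis
  then show ?thesis by (simp add: vv_def)
qed

end


context fixes p :: nat assumes pp: "prime p"
begin

lemma pp0: "0 < p" using pp prime_gt_0_nat by blast

lemma mulmod_inj: assumes c: "0 < c" "c < p" and j: "j < p" "j' < p" and e: "(j * c) mod p = (j' * c) mod p"
  shows "j = j'"
proof -
  have "p dvd (j' - j) * c" if le: "j \<le> j'" and e: "(j * c) mod p = (j' * c) mod p" for j j'
  proof -
    have "p dvd j' * c - j * c" using le e mod_eq_dvd_iff_nat[of "j*c" "j'*c" p] by (simp add: mult_le_mono1)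
    then show ?thesis by (simp add: diff_mult_distrib)
  qed
  moreover have nc: "\<not> p dvd c" using c by (simp add: nat_dvd_not_less)
  moreover have d0: "p dvd d \<Longrightarrow> d < p \<Longrightarrow> d = 0" for d :: nat using nat_dvd_not_less by auto
  ultimately have key: "j \<le> j' \<Longrightarrow> (j * c) mod p = (j' * c) mod p \<Longrightarrow> j' < p \<Longrightarrow> j = j'" for j j'
  proof -
    assume a: "j \<le> j'" "(j * c) mod p = (j' * c) mod p" "j' < p"
    have "p dvd (j' - j) * c" using a \<open>\<And>j j'. j \<le> j' \<Longrightarrow> _ \<Longrightarrow> _\<close> by blast
    then have "p dvd (j' - j)" using nc pp prime_dvd_mult_iff by blast
    moreover have "j' - j < p" using a by simp
    ultimately have "j' - j = 0" using d0 by blast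
    then show "j = j'" using a by simp
  qed
  show ?thesis
  proof (cases "j \<le> j'")
    case True then show ?thesis using key e j by blast
  next
    case False then show ?thesis using key[of j' j] e j by simp
  qed
qed

lemma mulmod_cover: assumes c: "0 < c" "c < p" and m: "m < p"
  shows "\<exists>j<p. (j * c) mod p = m"
proof -
  have inj: "inj_on (\<lambda>j. (j * c) mod p) {..<p}" unfolding inj_on_def using mulmod_inj[OF c] by blast
  have sub: "(\<lambda>j. (j * c) mod p) ` {..<p} \<subseteq> {..<p}" using pp0 by (intro image_subsetI) simp
  have "card ((\<lambda>j. (j * c) mod p) ` {..<p}) = card {..<p}" by (rule card_image[OF inj])
  then have "(\<lambda>j. (j * c) mod p) ` {..<p} = {..<p}" using sub card_subset_eq[OF finite_lessThan sub] by blast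
  then have "m \<in> (\<lambda>j. (j * c) mod p) ` {..<p}" using m by blast
  then show ?thesis by blast
qed

lemma const_of_inv: assumes u: "sp p u" and inv: "\<And>a. cshift p a u = u"
  shows "u = (\<lambda>i. False) \<or> u = (\<lambda>i. i < p)"
proof -
  have "u i = (i < p \<and> u 0)" for i
  proof (cases "i < p")
    case True
    have "u i = cshift p i u i" using inv by simp
    also have "\<dots> = u 0" using True by (simp add: cshift_def)
    finally show ?thesis using True by simp
  next
    case False then show ?thesis using u by (simp add: sp_def)
  qed
  then show ?thesis by (cases "u 0") auto
qed

lemma cinv_all: assumes c: "0 < c" "c < p" and u: "sp p u" and ci: "cshift p c u = u"
  shows "cshift p a u = u"
proof -
  have pj: "cshift p (j * c) u = u" for j
  proof (induction j)
    case 0 then show ?case using u pp0 by (simp add: cshift_id sp_def)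
  next
    case (Suc j)
    have "cshift p (Suc j * c) u = cshift p c (cshift p (j * c) u)" using pp0 by (simp add: cshift_comp)
    then show ?case using Suc ci by simp
  qed
  obtain j where "j < p" "(j * c) mod p = a mod p" using mulmod_cover[OF c, of "a mod p"] pp0 by auto
  then have "cshift p a u = cshift p (j * c) u" by (metis cshift_mod)
  then show ?thesis using pj by simp
qed

lemma pow_fst: assumes s: "s \<in> carrier (wreath p)"
  shows "emb (fst (s [^]\<^bsub>wreath p\<^esub> (j::nat))) = (\<Sum>i<j. sh p (i * snd s) (emb (fst s)))"
proof (induction j)
  case 0 then show ?case by (simp add: wone emb_def zero_fun_def)
next
  case (Suc j)
  have "fst (s [^]\<^bsub>wreath p\<^esub> Suc j) = (\<lambda>i. fst (s [^]\<^bsub>wreath p\<^esub> j) i \<noteq> cshift p (snd (s [^]\<^bsub>wreath p\<^esub> j)) (fst s) i)"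
    by (simp only: nat_pow_Suc wmult fst_conv)
  then have "emb (fst (s [^]\<^bsub>wreath p\<^esub> Suc j)) = emb (fst (s [^]\<^bsub>wreath p\<^esub> j)) + sh p (snd (s [^]\<^bsub>wreath p\<^esub> j)) (emb (fst s))"
    by (simp only: emb_xor emb_cshift)
  also have "sh p (snd (s [^]\<^bsub>wreath p\<^esub> j)) (emb (fst s)) = sh p (j * snd s) (emb (fst s))"
    using pow_snd[OF pp0 s] by (simp add: sh_mod)
  finally show ?case using Suc by simp
qed

lemma pow_p_center: assumes s: "s \<in> carrier (wreath p)" and ns: "snd s \<noteq> 0"
  shows "snd (s [^]\<^bsub>wreath p\<^esub> p) = 0 \<and> (fst (s [^]\<^bsub>wreath p\<^esub> p) = (\<lambda>i. False) \<or> fst (s [^]\<^bsub>wreath p\<^esub> p) = (\<lambda>i. i < p))"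
proof -
  interpret W: group "wreath p" by (rule Wgroup[OF pp0])
  have s0: "snd (s [^]\<^bsub>wreath p\<^esub> p) = 0" using pow_snd[OF pp0 s] by simp
  have com: "s [^]\<^bsub>wreath p\<^esub> p \<otimes>\<^bsub>wreath p\<^esub> s = s \<otimes>\<^bsub>wreath p\<^esub> s [^]\<^bsub>wreath p\<^esub> p"
  proof -
    have "s [^]\<^bsub>wreath p\<^esub> p \<otimes>\<^bsub>wreath p\<^esub> s = s [^]\<^bsub>wreath p\<^esub> Suc p" by (rule nat_pow_Suc[symmetric])
    also have "\<dots> = s \<otimes>\<^bsub>wreath p\<^esub> s [^]\<^bsub>wreath p\<^esub> p" by (rule W.nat_pow_Suc2[OF s])
    finally show ?thesis .
  qed
  have sc: "0 < snd s" "snd s < p" using s ns by (auto simp: wcarrier)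
  have ci: "cshift p (snd s) (fst (s [^]\<^bsub>wreath p\<^esub> p)) = fst (s [^]\<^bsub>wreath p\<^esub> p)"
    using commute_cshift[OF pp0 s _ s0 com] s by simp
  have "sp p (fst (s [^]\<^bsub>wreath p\<^esub> p))" using s by (simp add: sp_fst)
  then show ?thesis using const_of_inv cinv_all[OF sc] ci s0 by blast
qed

end


lemma sum_symdiff:
  fixes f :: "'a \<Rightarrow> nat \<Rightarrow> bit"
  assumes "finite A" "finite B"
  shows "sum f ((A - B) \<union> (B - A)) = sum f A + sum f B"
proof -
  have 1: "sum f A = sum f (A \<inter> B) + sum f (A - B)" using assms(1) by (rule sum.Int_Diff)
  have 2: "sum f B = sum f (A \<inter> B) + sum f (B - A)" using assms(2) sum.Int_Diff[of B f A] by (simp add: Int_commute)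
  have 3: "sum f ((A - B) \<union> (B - A)) = sum f (A - B) + sum f (B - A)"
    using assms by (intro sum.union_disjoint) blast+
  have 4: "sum f (A \<inter> B) + sum f (A \<inter> B) = 0" by (rule fun_bit_add_self)
  have "sum f A + sum f B = (sum f (A \<inter> B) + sum f (A \<inter> B)) + (sum f (A - B) + sum f (B - A))"
    unfolding 1 2 by (simp only: add.assoc add.left_commute)
  then show ?thesis unfolding 3 4 by simp
qed

definition supb :: "nat \<Rightarrow> (nat \<Rightarrow> bit) \<Rightarrow> bool" where "supb p e = (\<forall>i\<ge>p. e i = 0)"

lemma sucmod: "j < p \<Longrightarrow> Suc j mod p = (if Suc j = p then 0 else Suc j)" for j p :: nat
  by simp

lemma sucmod_inj: "j < p \<Longrightarrow> j' < p \<Longrightarrow> Suc j mod p = Suc j' mod p \<Longrightarrow> j = j'" for j j' p :: nat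
  by (simp only: sucmod split: if_splits)

lemma supb_sh: "supb p (sh p a e)" by (simp add: supb_def sh_def)
lemma supb_add: "supb p e \<Longrightarrow> supb p e' \<Longrightarrow> supb p (e + e')" by (simp add: supb_def)
lemma supb_sum: "(\<And>x. x \<in> A \<Longrightarrow> supb p (F x)) \<Longrightarrow> supb p (sum F A)"
  by (simp add: supb_def sum_fun_apply)
lemma sh_id: "0 < p \<Longrightarrow> supb p e \<Longrightarrow> a mod p = 0 \<Longrightarrow> sh p a e = e"
  by (auto simp: supb_def sh_def fun_eq_iff)
lemma supb_emb: "sp p u \<Longrightarrow> supb p (emb u)" by (simp add: supb_def sp_def emb_def)

definition onesb :: "nat \<Rightarrow> nat \<Rightarrow> bit" where "onesb p = emb (\<lambda>i. i < p)"

lemma sh_onesb: "0 < p \<Longrightarrow> sh p a (onesb p) = onesb p"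
  by (auto simp: sh_def onesb_def emb_def fun_eq_iff)

locale wsetup =
  fixes p :: nat and X0 :: "((nat \<Rightarrow> bool) \<times> nat) set" and t :: "(nat \<Rightarrow> bool) \<times> nat"
  assumes pp: "prime p" and po: "odd p" and X0c: "X0 \<subseteq> carrier (wreath p)" and tX: "t \<in> X0"
    and tc: "snd t \<noteq> 0"
begin

lemma p0: "0 < p" using pp prime_gt_0_nat by blast
lemma tcar: "t \<in> carrier (wreath p)" using tX X0c by blast
lemma c0: "0 < snd t" "snd t < p" using tc tcar by (auto simp: wcarrier)

definition yv :: "(nat \<Rightarrow> bool) \<times> nat \<Rightarrow> nat \<Rightarrow> bool" where
  "yv x = fst (x \<otimes>\<^bsub>wreath p\<^esub> t \<otimes>\<^bsub>wreath p\<^esub> inv\<^bsub>wreath p\<^esub> x \<otimes>\<^bsub>wreath p\<^esub> inv\<^bsub>wreath p\<^esub> t)"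

definition val :: "(nat \<times> ((nat \<Rightarrow> bool) \<times> nat)) set \<Rightarrow> nat \<Rightarrow> bit" where
  "val R = (\<Sum>(j, x)\<in>R. sh p (j * snd t) (emb (yv x)))"

definition Mb :: "(nat \<Rightarrow> bit) set" where
  "Mb = {e. \<exists>R. finite R \<and> R \<subseteq> {..<p} \<times> X0 \<and> (e = val R \<or> e = val R + onesb p)}"

lemma MbI: "finite R \<Longrightarrow> R \<subseteq> {..<p} \<times> X0 \<Longrightarrow> e = val R \<or> e = val R + onesb p \<Longrightarrow> e \<in> Mb"
  unfolding Mb_def by blast

lemma MbE: assumes "e \<in> Mb"
  obtains R where "finite R" "R \<subseteq> {..<p} \<times> X0" "e = val R \<or> e = val R + onesb p"
  using assms unfolding Mb_def by blast

lemma val_symdiff: "finite A \<Longrightarrow> finite B \<Longrightarrow> val ((A - B) \<union> (B - A)) = val A + val B"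
  unfolding val_def by (rule sum_symdiff)

lemma supb_val: "supb p (val R)"
  unfolding val_def by (rule supb_sum) (auto simp: supb_sh)

lemma Mb_zero: "0 \<in> Mb"
  unfolding Mb_def val_def by (intro CollectI exI[of _ "{}"]) simp

lemma Mb_ones: "onesb p \<in> Mb"
  unfolding Mb_def val_def by (intro CollectI exI[of _ "{}"]) simp

lemma Mb_add: assumes a: "a \<in> Mb" and b: "b \<in> Mb" shows "a + b \<in> Mb"
proof -
  obtain A where A: "finite A" "A \<subseteq> {..<p} \<times> X0" "a = val A \<or> a = val A + onesb p" using a by (rule MbE)
  obtain B where B: "finite B" "B \<subseteq> {..<p} \<times> X0" "b = val B \<or> b = val B + onesb p" using b by (rule MbE)
  let ?R = "(A - B) \<union> (B - A)"
  have R: "finite ?R" "?R \<subseteq> {..<p} \<times> X0" using A B by auto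
  have v: "val ?R = val A + val B" using A B val_symdiff by blast
  obtain ea where ea: "ea = 0 \<or> ea = onesb p" "a = val A + ea"
  proof (cases "a = val A")
    case True
    then have "a = val A + 0" by (simp only: add_0_right)
    then show ?thesis using that by blast
  next
    case False
    then have "a = val A + onesb p" using A(3) by blast
    then show ?thesis using that by blast
  qed
  obtain eb where eb: "eb = 0 \<or> eb = onesb p" "b = val B + eb"
  proof (cases "b = val B")
    case True
    then have "b = val B + 0" by (simp only: add_0_right)
    then show ?thesis using that by blast
  next
    case False
    then have "b = val B + onesb p" using B(3) by blast
    then show ?thesis using that by blast
  qed
  have ab: "a + b = val ?R + (ea + eb)" unfolding v ea(2) eb(2) by (simp only: add.assoc add.left_commute)
  have "ea + eb = 0 \<or> ea + eb = onesb p" using ea(1) eb(1) fun_bit_add_self[of "onesb p"] by force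
  then have "a + b = val ?R \<or> a + b = val ?R + onesb p" using ab add_0_right by metis
  then show ?thesis using R by (intro MbI)
qed

lemma val_shift: assumes R: "R \<subseteq> {..<p} \<times> X0"
  shows "sh p (snd t) (val R) = val ((\<lambda>(j, x). (Suc j mod p, x)) ` R)"
proof -
  let ?f = "\<lambda>(j::nat, x::(nat \<Rightarrow> bool) \<times> nat). (Suc j mod p, x)"
  have inj: "inj_on ?f R"
  proof (rule inj_onI)
    fix a b assume ab: "a \<in> R" "b \<in> R" "?f a = ?f b"
    obtain j x where a: "a = (j, x)" by (cases a)
    obtain j' x' where b: "b = (j', x')" by (cases b)
    have jj: "j < p" "j' < p" using ab(1,2) R a b by auto
    have e: "Suc j mod p = Suc j' mod p" "x = x'" using ab(3) a b by simp_all
    have "j = j'" by (rule sucmod_inj[OF jj e(1)])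
    then show "a = b" using a b e(2) by simp
  qed
  have "val (?f ` R) = (\<Sum>y\<in>R. (\<lambda>(j, x). sh p (j * snd t) (emb (yv x))) (?f y))"
    unfolding val_def by (simp add: sum.reindex[OF inj] comp_def)
  also have "\<dots> = (\<Sum>y\<in>R. sh p (snd t) ((\<lambda>(j, x). sh p (j * snd t) (emb (yv x))) y))"
  proof (rule sum.cong[OF refl])
    fix y assume "y \<in> R"
    obtain j x where y: "y = (j, x)" by (cases y)
    have "(Suc j mod p * snd t) mod p = (snd t + j * snd t) mod p" by (simp add: mod_mult_left_eq)
    then have "sh p (Suc j mod p * snd t) (emb (yv x)) = sh p (snd t) (sh p (j * snd t) (emb (yv x)))"
      by (metis sh_comp[OF p0] sh_mod)
    then show "(\<lambda>(j, x). sh p (j * snd t) (emb (yv x))) (?f y) = sh p (snd t) ((\<lambda>(j, x). sh p (j * snd t) (emb (yv x))) y)"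
      using y by simp
  qed
  also have "\<dots> = sh p (snd t) (val R)" unfolding val_def by (simp add: sh_sum)
  finally show ?thesis by simp
qed

lemma Mb_sh: assumes e: "e \<in> Mb" shows "sh p (snd t) e \<in> Mb"
proof -
  obtain A where A: "finite A" "A \<subseteq> {..<p} \<times> X0" "e = val A \<or> e = val A + onesb p" using e by (rule MbE)
  let ?R = "(\<lambda>(j, x). (Suc j mod p, x)) ` A"
  have R: "finite ?R" "?R \<subseteq> {..<p} \<times> X0" using A p0 by auto
  have "sh p (snd t) e = val ?R \<or> sh p (snd t) e = val ?R + onesb p"
    using A(3) val_shift[OF A(2)] sh_onesb[OF p0] by (auto simp: sh_add)
  then show ?thesis using R by (intro MbI)
qed

lemma Mb_supb: "e \<in> Mb \<Longrightarrow> supb p e"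
proof -
  assume "e \<in> Mb"
  then obtain R where "e = val R \<or> e = val R + onesb p" by (rule MbE)
  moreover have "supb p (onesb p)" unfolding onesb_def by (rule supb_emb) (simp add: sp_def)
  ultimately show ?thesis using supb_val supb_add by metis
qed

lemma Mb_shj: assumes e: "e \<in> Mb" shows "sh p (j * snd t) e \<in> Mb"
proof (induction j)
  case 0 then show ?case using e Mb_supb sh_id[OF p0] by simp
next
  case (Suc j)
  have "sh p (Suc j * snd t) e = sh p (snd t) (sh p (j * snd t) e)" using sh_comp[OF p0] by simp
  then show ?case using Mb_sh[OF Suc] by simp
qed

end


lemma (in group) comm_inv_left:
  assumes a: "a \<in> carrier G" and b: "b \<in> carrier G" and e: "a \<otimes> b = b \<otimes> a"
  shows "inv a \<otimes> b = b \<otimes> inv a"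
proof -
  have "inv a \<otimes> b = inv a \<otimes> (b \<otimes> a) \<otimes> inv a" using a b by (simp add: m_assoc)
  also have "\<dots> = inv a \<otimes> (a \<otimes> b) \<otimes> inv a" by (simp only: e)
  also have "\<dots> = b \<otimes> inv a" using a b by (simp add: m_assoc[symmetric])
  finally show ?thesis .
qed

context wsetup begin

abbreviation wm (infixl "\<star>" 70) where "a \<star> b \<equiv> a \<otimes>\<^bsub>wreath p\<^esub> b"
abbreviation wi where "wi a \<equiv> inv\<^bsub>wreath p\<^esub> a"
abbreviation tp where "tp k \<equiv> t [^]\<^bsub>wreath p\<^esub> (k::nat)"

lemma Wg: "group (wreath p)" by (rule Wgroup[OF p0])

lemma tp_car: "tp k \<in> carrier (wreath p)"
  using group.is_monoid[OF Wg] tcar by (simp add: monoid.nat_pow_closed)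

lemma tp_comm: "tp k \<star> t = t \<star> tp k"
  using monoid.nat_pow_Suc2[OF group.is_monoid[OF Wg] tcar] by simp

lemma decomp: assumes g: "g \<in> carrier (wreath p)"
  shows "\<exists>k<p. \<exists>v. sp p v \<and> g = vv v \<star> tp k"
proof -
  have "snd g < p" using g by (simp add: wcarrier)
  then obtain k where k: "k < p" "(k * snd t) mod p = snd g" using mulmod_cover[OF pp c0] by blast
  have "snd g = snd (tp k)" using k pow_snd[OF p0 tcar] by simp
  then have "g = vv (fst (g \<star> wi (tp k))) \<star> tp k" using decomp_vv[OF p0 g tp_car] by blast
  moreover have "sp p (fst (g \<star> wi (tp k)))"
    using g tp_car group.inv_closed[OF Wg] group.is_monoid[OF Wg] by (simp add: sp_fst monoid.m_closed)
  ultimately show ?thesis using k by blast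
qed

lemma mult_form: assumes v: "sp p v" and v': "sp p v'"
  shows "(vv v \<star> tp k) \<star> (vv v' \<star> tp k') = vv (xr v (cshift p (k * snd t) v')) \<star> tp (k + k')"
proof -
  interpret W: group "wreath p" by (rule Wg)
  have c: "vv v \<in> carrier (wreath p)" "vv v' \<in> carrier (wreath p)" "vv (cshift p (k * snd t) v') \<in> carrier (wreath p)"
    using vv_carrier[OF p0] v v' sp_cshift by auto
  have "(vv v \<star> tp k) \<star> (vv v' \<star> tp k') = vv v \<star> (tp k \<star> vv v') \<star> tp k'"
    using c tp_car by (simp add: W.m_assoc)
  also have "\<dots> = vv v \<star> (vv (cshift p (k * snd t) v') \<star> tp k) \<star> tp k'"
    using pow_vv[OF p0 tcar v'] by simp
  also have "\<dots> = (vv v \<star> vv (cshift p (k * snd t) v')) \<star> (tp k \<star> tp k')"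
    using c tp_car by (simp add: W.m_assoc)
  also have "\<dots> = vv (xr v (cshift p (k * snd t) v')) \<star> tp (k + k')"
    using vv_mult[OF p0 sp_cshift] W.nat_pow_mult[OF tcar] by simp
  finally show ?thesis .
qed

lemma commutator: assumes v: "sp p v"
  shows "(vv v \<star> tp k) \<star> t \<star> wi (vv v \<star> tp k) \<star> wi t = vv (xr v (cshift p (snd t) v))"
proof -
  interpret W: group "wreath p" by (rule Wg)
  let ?a = "vv v" and ?T = "tp k"
  have a: "?a \<in> carrier (wreath p)" using vv_carrier[OF p0 v] .
  have T: "?T \<in> carrier (wreath p)" by (rule tp_car)
  have t: "t \<in> carrier (wreath p)" by (rule tcar)
  have ia: "wi ?a = ?a" by (rule vv_inv[OF p0 v])
  have "(?a \<star> ?T) \<star> t \<star> wi (?a \<star> ?T) \<star> wi t = ?a \<star> (?T \<star> t) \<star> wi ?T \<star> ?a \<star> wi t"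
    using a T t ia by (simp add: W.inv_mult_group W.m_assoc)
  also have "\<dots> = ?a \<star> (t \<star> ?T) \<star> wi ?T \<star> ?a \<star> wi t" by (simp only: tp_comm)
  also have "\<dots> = ?a \<star> t \<star> ?a \<star> wi t" using a T t by (simp add: W.m_assoc)
  also have "\<dots> = ?a \<star> (t \<star> ?a) \<star> wi t" using a t by (simp add: W.m_assoc)
  also have "\<dots> = ?a \<star> (vv (cshift p (snd t) v) \<star> t) \<star> wi t" using t_vv[OF p0 t v] by simp
  also have "\<dots> = ?a \<star> vv (cshift p (snd t) v)"
    using a t vv_carrier[OF p0 sp_cshift] by (simp add: W.m_assoc)
  also have "\<dots> = vv (xr v (cshift p (snd t) v))" using vv_mult[OF p0 sp_cshift] by simp
  finally show ?thesis .
qed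

end


context wsetup begin

definition Dv :: "(nat \<Rightarrow> bool) \<Rightarrow> nat \<Rightarrow> bit" where
  "Dv u = emb u + sh p (snd t) (emb u)"

lemma D_xr: "Dv (xr a b) = Dv a + Dv b"
  unfolding Dv_def emb_xr sh_add by (simp only: add.assoc add.left_commute)

lemma D_cshift: "Dv (cshift p j v) = sh p j (Dv v)"
proof -
  have "sh p (snd t) (sh p j (emb v)) = sh p j (sh p (snd t) (emb v))"
    using sh_comp[OF p0] by (simp add: add.commute)
  then show ?thesis unfolding Dv_def emb_cshift sh_add by simp
qed

lemma D_inv: "cshift p (snd t) w = w \<Longrightarrow> Dv w = 0"
  unfolding Dv_def by (metis emb_cshift fun_bit_add_self)

lemma emb_false: "emb (\<lambda>i. False) = 0" by (simp add: emb_def zero_fun_def)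

lemma D_false: "Dv (\<lambda>i. False) = 0"
  unfolding Dv_def emb_false by simp

definition Kset :: "((nat \<Rightarrow> bool) \<times> nat) set" where
  "Kset = {g \<in> carrier (wreath p). \<exists>k v. sp p v \<and> g = vv v \<star> tp k \<and> Dv v \<in> Mb}"

lemma KsetI: "sp p v \<Longrightarrow> Dv v \<in> Mb \<Longrightarrow> vv v \<star> tp k \<in> Kset"
  unfolding Kset_def using vv_carrier[OF p0] tp_car group.is_monoid[OF Wg]
  by (blast intro: monoid.m_closed)

lemma KsetE: assumes "g \<in> Kset" obtains k v where "sp p v" "g = vv v \<star> tp k" "Dv v \<in> Mb"
  using assms unfolding Kset_def by blast

lemma K_sub: "Kset \<subseteq> carrier (wreath p)" unfolding Kset_def by blast

lemma K_one: "\<one>\<^bsub>wreath p\<^esub> \<in> Kset"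
proof -
  have o: "vv (\<lambda>i. False) = \<one>\<^bsub>wreath p\<^esub>" by (simp add: vv_def wone)
  have "vv (\<lambda>i. False) \<star> tp 0 = \<one>\<^bsub>wreath p\<^esub>"
    unfolding o using group.is_monoid[OF Wg] by (simp add: monoid.l_one monoid.one_closed)
  moreover have "vv (\<lambda>i. False) \<star> tp 0 \<in> Kset" by (rule KsetI) (auto simp: sp_def D_false Mb_zero)
  ultimately show ?thesis by simp
qed

lemma K_mult: assumes a: "a \<in> Kset" and b: "b \<in> Kset" shows "a \<star> b \<in> Kset"
proof -
  obtain k v where A: "sp p v" "a = vv v \<star> tp k" "Dv v \<in> Mb" using a by (rule KsetE)
  obtain k' v' where B: "sp p v'" "b = vv v' \<star> tp k'" "Dv v' \<in> Mb" using b by (rule KsetE)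
  have "a \<star> b = vv (xr v (cshift p (k * snd t) v')) \<star> tp (k + k')" using A B mult_form by simp
  moreover have "Dv (xr v (cshift p (k * snd t) v')) \<in> Mb"
    unfolding D_xr D_cshift using A(3) B(3) Mb_add Mb_shj by blast
  ultimately show ?thesis using KsetI sp_xr A(1) sp_cshift by metis
qed

lemma K_inv: assumes a: "a \<in> Kset" shows "wi a \<in> Kset"
proof -
  interpret W: group "wreath p" by (rule Wg)
  obtain k v where A: "sp p v" "a = vv v \<star> tp k" "Dv v \<in> Mb" using a by (rule KsetE)
  have vc: "vv v \<in> carrier (wreath p)" using vv_carrier[OF p0 A(1)] .
  have itc: "wi (tp k) \<in> carrier (wreath p)" using tp_car by simp
  obtain k' w where w: "sp p w" "wi (tp k) = vv w \<star> tp k'" using decomp[OF itc] by blast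
  have wc: "vv w \<in> carrier (wreath p)" using vv_carrier[OF p0 w(1)] .
  have "vv w = wi (tp k) \<star> wi (tp k')" using w(2) wc tp_car by (simp add: W.m_assoc)
  also have "\<dots> = wi (tp k' \<star> tp k)" using tp_car by (simp add: W.inv_mult_group)
  also have "\<dots> = wi (tp (k' + k))" using W.nat_pow_mult[OF tcar] by simp
  finally have vw: "vv w = wi (tp (k' + k))" .
  have "vv w \<star> t = t \<star> vv w"
    unfolding vw using W.comm_inv_left[OF tp_car tcar tp_comm] .
  then have "cshift p (snd t) (fst (vv w)) = fst (vv w)"
    using commute_cshift[OF p0 tcar wc] by (simp add: vv_def)
  then have Dw: "Dv w = 0" using D_inv by (simp add: vv_def)
  have "wi a = wi (tp k) \<star> vv v" using A(2) vc tp_car by (simp add: W.inv_mult_group vv_inv[OF p0 A(1)])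
  also have "\<dots> = (vv w \<star> tp k') \<star> (vv v \<star> tp 0)" using w(2) vc by simp
  also have "\<dots> = vv (xr w (cshift p (k' * snd t) v)) \<star> tp (k' + 0)" by (rule mult_form[OF w(1) A(1)])
  finally have "wi a = vv (xr w (cshift p (k' * snd t) v)) \<star> tp (k' + 0)" .
  moreover have "Dv (xr w (cshift p (k' * snd t) v)) \<in> Mb"
    unfolding D_xr D_cshift Dw using A(3) Mb_shj by simp
  ultimately show ?thesis using KsetI sp_xr w(1) sp_cshift by metis
qed

lemma yv_form: assumes x: "x \<in> X0"
  shows "\<exists>v. sp p v \<and> x \<in> Kset \<and> emb (yv x) = Dv v"
proof -
  have xc: "x \<in> carrier (wreath p)" using x X0c by blast
  obtain k v where kv: "k < p" "sp p v" "x = vv v \<star> tp k" using decomp[OF xc] by blast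
  have "yv x = xr v (cshift p (snd t) v)"
    unfolding yv_def using commutator[OF kv(2), of k] kv(3) by (simp add: vv_def)
  then have e: "emb (yv x) = Dv v" unfolding Dv_def by (simp add: emb_xr emb_cshift)
  have "sp p (yv x)" unfolding yv_def
    using xc tcar group.inv_closed[OF Wg] group.is_monoid[OF Wg] by (simp add: sp_fst monoid.m_closed)
  then have "val {(0, x)} = emb (yv x)" unfolding val_def using sh_id[OF p0] supb_emb by simp
  then have "Dv v \<in> Mb" using e x p0 by (intro MbI[of "{(0, x)}"]) auto
  then have "x \<in> Kset" using kv KsetI by blast
  then show ?thesis using e kv by blast
qed

lemma X0_K: "X0 \<subseteq> Kset" using yv_form by blast

end

locale wgen = wsetup +
  assumes GEN: "\<And>K g. K \<subseteq> carrier (wreath p) \<Longrightarrow> \<one>\<^bsub>wreath p\<^esub> \<in> K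
     \<Longrightarrow> (\<And>a b. a \<in> K \<Longrightarrow> b \<in> K \<Longrightarrow> a \<otimes>\<^bsub>wreath p\<^esub> b \<in> K)
     \<Longrightarrow> (\<And>a. a \<in> K \<Longrightarrow> inv\<^bsub>wreath p\<^esub> a \<in> K) \<Longrightarrow> X0 \<subseteq> K
     \<Longrightarrow> g \<in> carrier (wreath p) \<Longrightarrow> \<exists>z\<in>group_center (wreath p). \<exists>k\<in>K. g = z \<otimes>\<^bsub>wreath p\<^esub> k"
begin

lemma D_all: assumes u: "sp p u" shows "Dv u \<in> Mb"
proof -
  interpret W: group "wreath p" by (rule Wg)
  have uc: "vv u \<in> carrier (wreath p)" using vv_carrier[OF p0 u] .
  obtain z kk where z: "z \<in> group_center (wreath p)" and kk: "kk \<in> Kset" and e: "vv u = z \<star> kk"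
    using GEN[OF K_sub K_one K_mult K_inv X0_K uc] by blast
  obtain k v where A: "sp p v" "kk = vv v \<star> tp k" "Dv v \<in> Mb" using kk by (rule KsetE)
  have zc: "z \<in> carrier (wreath p)" using z by (simp add: group_center_def)
  have zs: "snd z = 0" using center_snd[OF p0 z] .
  have zt: "z \<star> t = t \<star> z" using z tcar by (simp add: group_center_def)
  have zi: "cshift p (snd t) (fst z) = fst z" using commute_cshift[OF p0 tcar zc zs zt] .
  have zv: "z = vv (fst z)" using zs by (simp add: vv_def prod_eq_iff)
  have "snd (vv u) = snd (tp k)" using e A(2) zs tp_car by (simp add: vv_def wmult wcarrier)
  then have ts: "snd (tp k) = 0" by (simp add: vv_def)
  have ti: "cshift p (snd t) (fst (tp k)) = fst (tp k)"
    using commute_cshift[OF p0 tcar tp_car ts tp_comm] .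
  have tv: "tp k = vv (fst (tp k))" using ts by (simp add: vv_def prod_eq_iff)
  have sz: "sp p (fst z)" "sp p (fst (tp k))" using zc tp_car by (auto simp: sp_fst)
  have "vv u = vv (fst z) \<star> vv v \<star> vv (fst (tp k))" using e A(2) zv tv
    by (metis W.m_assoc vv_carrier[OF p0] A(1) sz)
  also have "\<dots> = vv (xr (xr (fst z) v) (fst (tp k)))" using vv_mult[OF p0] A(1) sz by simp
  finally have "u = xr (xr (fst z) v) (fst (tp k))" by (simp add: vv_def)
  then have "Dv u = Dv (fst z) + Dv v + Dv (fst (tp k))" by (simp add: D_xr)
  then show ?thesis using D_inv zi ti A(3) by simp
qed

end


lemma sum_pairs: "(\<Sum>i<n. f (2*i+1) + f (2*i+2)) = (\<Sum>i<2*n. f (Suc i))" for f :: "nat \<Rightarrow> 'a::comm_monoid_add"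
  by (induction n) (simp_all add: add.assoc)

lemma emb_bit: "emb (\<lambda>i. e i = 1) = e"
proof -
  have "(of_bool (b = 1) :: bit) = b" for b :: bit by (cases b) simp_all
  then show ?thesis by (simp add: emb_def fun_eq_iff)
qed

context wgen begin

lemma emb_all: assumes u: "sp p u" shows "emb u \<in> Mb"
proof -
  define c where "c = snd t"
  define n where "n = p div 2"
  have pn: "p = Suc (2 * n)" using po n_def by simp
  define e where "e = emb u"
  define F where "F j = sh p (j * c) e" for j
  define w where "w = (\<lambda>i. (\<Sum>i'<n. F (2*i'+1)) i = 1)"
  have ew: "emb w = (\<Sum>i'<n. F (2*i'+1))" unfolding w_def by (rule emb_bit)
  have sw: "sp p w"
  proof -
    have "supb p (\<Sum>i'<n. F (2*i'+1))" unfolding F_def by (rule supb_sum) (simp add: supb_sh)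
    then show ?thesis unfolding w_def sp_def supb_def by simp
  qed
  have Fs: "sh p c (F (2*i+1)) = F (2*i+2)" for i
    unfolding F_def using sh_comp[OF p0] by (simp add: algebra_simps)
  have "Dv w = (\<Sum>i'<n. F (2*i'+1)) + (\<Sum>i'<n. F (2*i'+2))"
    unfolding Dv_def ew c_def[symmetric] sh_sum Fs by simp
  also have "\<dots> = (\<Sum>i<n. F (2*i+1) + F (2*i+2))" by (simp only: sum.distrib)
  also have "\<dots> = (\<Sum>i<2*n. F (Suc i))" by (rule sum_pairs)
  finally have Dw: "Dv w = (\<Sum>i<2*n. F (Suc i))" .
  have F0: "F 0 = e" unfolding F_def e_def using sh_id[OF p0 supb_emb[OF u]] by simp
  have "(\<Sum>j<p. F j) = (\<Sum>j<Suc (2*n). F j)" using pn by simp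
  also have "\<dots> = F 0 + (\<Sum>i<2*n. F (Suc i))" by (rule sum.lessThan_Suc_shift)
  finally have N: "(\<Sum>j<p. F j) = e + Dv w" unfolding F0 Dw .
  define s where "s = (u, c)"
  have sc: "s \<in> carrier (wreath p)" using u c0 by (simp add: s_def c_def wcarrier sp_def)
  have ns: "snd s \<noteq> 0" using c0 by (simp add: s_def c_def)
  have "emb (fst (s [^]\<^bsub>wreath p\<^esub> p)) = (\<Sum>j<p. F j)"
    unfolding pow_fst[OF pp sc] F_def e_def by (simp add: s_def)
  moreover have "emb (fst (s [^]\<^bsub>wreath p\<^esub> p)) = 0 \<or> emb (fst (s [^]\<^bsub>wreath p\<^esub> p)) = onesb p"
    using pow_p_center[OF pp sc ns] emb_false by (auto simp: onesb_def)
  ultimately have NM: "(\<Sum>j<p. F j) \<in> Mb" using Mb_zero Mb_ones by auto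
  have "e = (\<Sum>j<p. F j) + Dv w" unfolding N by (simp add: add.assoc)
  then show ?thesis using Mb_add[OF NM D_all[OF sw]] e_def by simp
qed

end


definition bv :: "nat set \<Rightarrow> nat \<Rightarrow> bit" where "bv S = (\<lambda>i. if i \<in> S then 1 else 0)"

lemma supb_sub: "{x. supb m x} \<subseteq> bv ` Pow {..<m}"
proof
  fix x assume "x \<in> {x. supb m x}"
  then have s: "\<And>i. i \<ge> m \<Longrightarrow> x i = 0" by (simp add: supb_def)
  have "x = bv {i. i < m \<and> x i = 1}"
  proof
    fix i show "x i = bv {i. i < m \<and> x i = 1} i"
    proof (cases "i < m")
      case True then show ?thesis by (cases "x i") (auto simp: bv_def)
    next
      case False then show ?thesis using s[of i] by (simp add: bv_def)
    qed
  qed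
  then show "x \<in> bv ` Pow {..<m}" by blast
qed

lemma card_bv: "card (bv ` Pow {..<m}) \<le> 2 ^ m"
proof -
  have "card (bv ` Pow {..<m}) \<le> card (Pow {..<m::nat})" by (rule card_image_le) simp
  also have "\<dots> = 2 ^ m" by (simp add: card_Pow)
  finally show ?thesis .
qed

lemma bit_eps: "a = 0 \<or> a = ob \<Longrightarrow> b = 0 \<or> b = ob \<Longrightarrow> a + b = 0 \<or> a + b = (ob::nat\<Rightarrow>bit)"
  by (elim disjE) simp_all

lemma eps_form: "(e = v \<or> e = v + ob) \<longleftrightarrow> (\<exists>eps. (eps = 0 \<or> eps = ob) \<and> e = v + (eps::nat\<Rightarrow>bit))"
  by (metis add_0_right)

context wsetup begin

definition nrm :: "(nat \<Rightarrow> bit) \<Rightarrow> nat \<Rightarrow> bit" where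
  "nrm x = (if x (p - 1) = 1 then x + onesb p else x)"

lemma onesb_app: "onesb p i = (if i < p then 1 else 0)" by (simp add: onesb_def emb_def)

lemma nrm_supb: assumes x: "supb p x" shows "supb (p - 1) (nrm x)"
  unfolding supb_def
proof (intro allI impI)
  fix i assume i: "p - 1 \<le> i"
  show "nrm x i = 0"
  proof (cases "i = p - 1")
    case True
    then show ?thesis using p0 by (cases "x (p - 1)") (auto simp: nrm_def onesb_app)
  next
    case False
    then have "i \<ge> p" using i by simp
    then show ?thesis using x by (simp add: nrm_def onesb_app supb_def)
  qed
qed

lemma nrm_eq: assumes "nrm x = nrm y" shows "x + y = 0 \<or> x + y = onesb p"
proof (cases "x (p - 1) = 1"; cases "y (p - 1) = 1")
  assume "x (p - 1) = 1" "y (p - 1) = 1"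
  then have "x + onesb p = y + onesb p" using assms by (simp add: nrm_def)
  then have "x = y" by simp
  then show ?thesis by simp
next
  assume "x (p - 1) = 1" "y (p - 1) \<noteq> 1"
  then have "y = x + onesb p" using assms by (simp add: nrm_def)
  then have "x + y = (x + x) + onesb p" by (simp only: add.assoc)
  then show ?thesis by simp
next
  assume "x (p - 1) \<noteq> 1" "y (p - 1) = 1"
  then have "x = y + onesb p" using assms by (simp add: nrm_def)
  then have "x + y = (y + y) + onesb p" by (simp only: add.assoc add.commute[of "onesb p" y])
  then show ?thesis by simp
next
  assume "x (p - 1) \<noteq> 1" "y (p - 1) \<noteq> 1"
  then have "x = y" using assms by (simp add: nrm_def)
  then show ?thesis by simp
qed

lemma val_split: assumes "finite R" "D \<subseteq> R" shows "val R = val (R - D) + val D"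
  unfolding val_def using sum.subset_diff[OF assms(2) assms(1)] .

lemma reduce: assumes R: "finite R" "R \<subseteq> {..<p} \<times> X0" "e = val R \<or> e = val R + onesb p"
  and big: "card R \<ge> p"
  shows "\<exists>R'. finite R' \<and> R' \<subseteq> {..<p} \<times> X0 \<and> (e = val R' \<or> e = val R' + onesb p) \<and> card R' < card R"
proof -
  let ?phi = "\<lambda>A. nrm (val A)"
  have img: "?phi ` Pow R \<subseteq> {x. supb (p - 1) x}"
    by (rule image_subsetI, rule CollectI, rule nrm_supb[OF supb_val])
  have img2: "?phi ` Pow R \<subseteq> bv ` Pow {..<p - 1}" using img supb_sub by (rule subset_trans)
  have "card (?phi ` Pow R) \<le> card (bv ` Pow {..<p - 1})" by (rule card_mono[OF _ img2]) simp
  also have "\<dots> \<le> 2 ^ (p - 1)" by (rule card_bv)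
  also have "\<dots> < 2 ^ card R" using big p0 by simp
  also have "\<dots> = card (Pow R)" using R(1) by (simp add: card_Pow)
  finally have lt: "card (?phi ` Pow R) < card (Pow R)" .
  have ni: "\<not> inj_on ?phi (Pow R)"
  proof
    assume "inj_on ?phi (Pow R)"
    then have "card (?phi ` Pow R) = card (Pow R)" by (rule card_image)
    then show False using lt by simp
  qed
  have "\<exists>A\<in>Pow R. \<exists>B\<in>Pow R. ?phi A = ?phi B \<and> A \<noteq> B" using ni unfolding inj_on_def by simp
  then obtain A B where AB0: "A \<in> Pow R" "B \<in> Pow R" "?phi A = ?phi B" "A \<noteq> B" by (elim bexE conjE)
  have AB: "A \<subseteq> R" "B \<subseteq> R" "A \<noteq> B" "?phi A = ?phi B" using AB0 by simp_all
  let ?D = "(A - B) \<union> (B - A)"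
  have fin: "finite A" "finite B" using AB(1,2) R(1) finite_subset by metis+
  have vD: "val ?D = val A + val B" using val_symdiff[OF fin] .
  have D0: "val ?D = 0 \<or> val ?D = onesb p" unfolding vD using nrm_eq[OF AB(4)] .
  have Dsub: "?D \<subseteq> R" using AB by blast
  have Dne: "?D \<noteq> {}" using AB(3) by blast
  let ?R = "R - ?D"
  have vR: "val R = val ?R + val ?D" using val_split[OF R(1) Dsub] .
  obtain eps where eps: "eps = 0 \<or> eps = onesb p" "e = val R + eps" using eps_form[THEN iffD1, OF R(3)] by metis
  have "e = val ?R + (val ?D + eps)" unfolding eps(2) vR by (simp only: add.assoc)
  then have "e = val ?R \<or> e = val ?R + onesb p" using eps_form[THEN iffD2] bit_eps[OF D0 eps(1)] by metis
  moreover have "card ?R < card R"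
  proof (rule psubset_card_mono[OF R(1)])
    show "?R \<subset> R" using Dsub Dne by blast
  qed
  moreover have "finite ?R" "?R \<subseteq> {..<p} \<times> X0" using R(1,2) by auto
  ultimately show ?thesis by (intro exI[of _ ?R]) (simp only: conj_absorb simp_thms)
qed

lemma small_rep: assumes e: "e \<in> Mb"
  shows "\<exists>R. finite R \<and> R \<subseteq> {..<p} \<times> X0 \<and> (e = val R \<or> e = val R + onesb p) \<and> card R \<le> p - 1"
proof -
  let ?P = "\<lambda>R. finite R \<and> R \<subseteq> {..<p} \<times> X0 \<and> (e = val R \<or> e = val R + onesb p)"
  obtain R0 where "finite R0" "R0 \<subseteq> {..<p} \<times> X0" "e = val R0 \<or> e = val R0 + onesb p" using e by (rule MbE)
  then have ex: "\<exists>R. ?P R" by (intro exI[of _ R0]) simp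
  let ?n = "LEAST n. \<exists>R. ?P R \<and> card R = n"
  obtain R where R: "?P R" "card R = ?n" using LeastI_ex[of "\<lambda>n. \<exists>R. ?P R \<and> card R = n"] ex by blast
  have "card R \<le> p - 1"
  proof (rule ccontr)
    assume "\<not> card R \<le> p - 1"
    then have "card R \<ge> p" by simp
    moreover have "finite R" "R \<subseteq> {..<p} \<times> X0" "e = val R \<or> e = val R + onesb p" using R(1) by simp_all
    ultimately have "\<exists>R'. finite R' \<and> R' \<subseteq> {..<p} \<times> X0 \<and> (e = val R' \<or> e = val R' + onesb p) \<and> card R' < card R"
      using reduce by presburger
    then obtain R' where R': "?P R'" "card R' < card R" by metis
    have "?n \<le> card R'" using R'(1) by (intro Least_le) blast
    then show False using R'(2) R(2) by simp
  qed
  then show ?thesis using R by blast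
qed

end


lemma word_prod_Nil[simp]: "word_prod G [] = \<one>\<^bsub>G\<^esub>" by (simp add: word_prod_def)
lemma word_prod_Cons[simp]: "word_prod G (x # xs) = x \<otimes>\<^bsub>G\<^esub> word_prod G xs" by (simp add: word_prod_def)

lemma word_prod_carrier: "monoid G \<Longrightarrow> set xs \<subseteq> carrier G \<Longrightarrow> word_prod G xs \<in> carrier G"
  by (induction xs) (auto simp: monoid.m_closed monoid.one_closed)

lemma word_prod_append: "monoid G \<Longrightarrow> set xs \<subseteq> carrier G \<Longrightarrow> set ys \<subseteq> carrier G \<Longrightarrow>
   word_prod G (xs @ ys) = word_prod G xs \<otimes>\<^bsub>G\<^esub> word_prod G ys"
  by (induction xs) (auto simp: monoid.m_assoc monoid.l_one word_prod_carrier)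

context wsetup begin

definition cw :: "(nat \<Rightarrow> bool) \<times> nat \<Rightarrow> ((nat \<Rightarrow> bool) \<times> nat) list" where
  "cw x = [x, t, wi x, wi t]"

definition Lj :: "(nat \<times> ((nat \<Rightarrow> bool) \<times> nat)) set \<Rightarrow> nat \<Rightarrow> ((nat \<Rightarrow> bool) \<times> nat) list" where
  "Lj R j = (SOME xs. distinct xs \<and> set xs = {x. (j, x) \<in> R})"

definition Yw where "Yw R j = concat (map cw (Lj R j))"

definition FW where "FW R n = concat (map (\<lambda>j. Yw R j @ [t]) [0..<n])"

lemma Lj_prop: "finite R \<Longrightarrow> distinct (Lj R j) \<and> set (Lj R j) = {x. (j, x) \<in> R}"
proof -
  assume R: "finite R"
  have "{x. (j, x) \<in> R} \<subseteq> snd ` R" by force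
  then have "finite {x. (j, x) \<in> R}" using R finite_subset by blast
  then have "\<exists>xs. distinct xs \<and> set xs = {x. (j, x) \<in> R}" using finite_distinct_list by blast
  then show ?thesis unfolding Lj_def by (rule someI_ex)
qed

lemma mon: "monoid (wreath p)" using group.is_monoid[OF Wg] .

lemma X0_car: "x \<in> X0 \<Longrightarrow> x \<in> carrier (wreath p)" using X0c by blast

lemma cw_car: "x \<in> X0 \<Longrightarrow> set (cw x) \<subseteq> carrier (wreath p)"
  using X0_car tcar group.inv_closed[OF Wg] by (auto simp: cw_def)

lemma comm_vv: assumes x: "x \<in> X0" shows "word_prod (wreath p) (cw x) = vv (yv x)"
proof -
  interpret W: group "wreath p" by (rule Wg)
  have xc: "x \<in> carrier (wreath p)" using X0_car[OF x] .
  obtain k v where kv: "k < p" "sp p v" "x = vv v \<star> tp k" using decomp[OF xc] by blast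
  have cm: "x \<star> t \<star> wi x \<star> wi t = vv (xr v (cshift p (snd t) v))" using commutator[OF kv(2)] kv(3) by simp
  have "word_prod (wreath p) (cw x) = x \<star> t \<star> wi x \<star> wi t"
    using xc tcar by (simp add: cw_def W.m_assoc)
  also have "\<dots> = vv (yv x)" unfolding yv_def cm by (simp add: vv_def)
  finally show ?thesis .
qed

lemma sp_yv: "x \<in> X0 \<Longrightarrow> sp p (yv x)"
  unfolding yv_def using X0_car tcar group.inv_closed[OF Wg] mon by (simp add: sp_fst monoid.m_closed)

lemma Y_prod: assumes xs: "set xs \<subseteq> X0" "distinct xs"
  shows "\<exists>r. sp p r \<and> word_prod (wreath p) (concat (map cw xs)) = vv r \<and> emb r = (\<Sum>x\<in>set xs. emb (yv x))"
  using xs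
proof (induction xs)
  case Nil
  have "word_prod (wreath p) (concat (map cw [])) = vv (\<lambda>i. False)" by (simp add: vv_def wone)
  then show ?case using emb_false by (auto simp: sp_def)
next
  case (Cons x xs)
  then obtain r where r: "sp p r" "word_prod (wreath p) (concat (map cw xs)) = vv r" "emb r = (\<Sum>x\<in>set xs. emb (yv x))" by auto
  have x: "x \<in> X0" using Cons.prems by simp
  have cs: "set (concat (map cw xs)) \<subseteq> carrier (wreath p)" using Cons.prems cw_car by auto
  have "word_prod (wreath p) (concat (map cw (x # xs))) = word_prod (wreath p) (cw x) \<star> word_prod (wreath p) (concat (map cw xs))"
    using word_prod_append[OF mon cw_car[OF x] cs] by simp
  also have "\<dots> = vv (xr (yv x) r)" using comm_vv[OF x] r vv_mult[OF p0] by simp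
  finally show ?case using r Cons.prems sp_xr[OF sp_yv[OF x] r(1)] by (intro exI[of _ "xr (yv x) r"]) (simp add: emb_xr)
qed

lemma Yw_car: "R \<subseteq> {..<p} \<times> X0 \<Longrightarrow> finite R \<Longrightarrow> set (Yw R j) \<subseteq> carrier (wreath p)"
  unfolding Yw_def using Lj_prop[of R j] cw_car by auto

lemma FW_prod: assumes R: "R \<subseteq> {..<p} \<times> X0" "finite R"
  shows "\<exists>r. sp p r \<and> word_prod (wreath p) (FW R n) = vv r \<star> tp n \<and>
     emb r = (\<Sum>j<n. sh p (j * snd t) (\<Sum>x\<in>{x. (j, x) \<in> R}. emb (yv x)))"
proof (induction n)
  case 0
  have o: "vv (\<lambda>i. False) = \<one>\<^bsub>wreath p\<^esub>" by (simp add: vv_def wone)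
  have "word_prod (wreath p) (FW R 0) = vv (\<lambda>i. False) \<star> tp 0"
    unfolding o using mon by (simp add: FW_def monoid.l_one[OF mon] monoid.one_closed)
  then show ?case using emb_false by (auto simp: sp_def)
next
  case (Suc n)
  then obtain r where r: "sp p r" "word_prod (wreath p) (FW R n) = vv r \<star> tp n"
    "emb r = (\<Sum>j<n. sh p (j * snd t) (\<Sum>x\<in>{x. (j, x) \<in> R}. emb (yv x)))" by blast
  have LP: "distinct (Lj R n)" "set (Lj R n) = {x. (n, x) \<in> R}" using Lj_prop[OF R(2)] by auto
  have LX: "set (Lj R n) \<subseteq> X0" using LP R(1) by auto
  obtain y where y: "sp p y" "word_prod (wreath p) (Yw R n) = vv y" "emb y = (\<Sum>x\<in>{x. (n, x) \<in> R}. emb (yv x))"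
    using Y_prod[OF LX LP(1)] LP(2) unfolding Yw_def by auto
  have fc: "set (FW R n) \<subseteq> carrier (wreath p)" unfolding FW_def using Yw_car[OF R] tcar by auto
  have yc: "set (Yw R n @ [t]) \<subseteq> carrier (wreath p)" using Yw_car[OF R] tcar by auto
  have "word_prod (wreath p) (FW R (Suc n)) = word_prod (wreath p) (FW R n) \<star> word_prod (wreath p) (Yw R n @ [t])"
    unfolding FW_def using word_prod_append[OF mon fc[unfolded FW_def] yc] by simp
  also have "word_prod (wreath p) (Yw R n @ [t]) = vv y \<star> t"
    using word_prod_append[OF mon Yw_car[OF R] , of "[t]"] tcar y(2) mon
    by (simp add: monoid.r_one)
  also have "vv y \<star> t = vv y \<star> tp 1" using tcar mon by (simp add: monoid.l_one)
  finally have "word_prod (wreath p) (FW R (Suc n)) = (vv r \<star> tp n) \<star> (vv y \<star> tp 1)"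
    using r(2) by simp
  also have "\<dots> = vv (xr r (cshift p (n * snd t) y)) \<star> tp (n + 1)" by (rule mult_form[OF r(1) y(1)])
  finally have P1: "word_prod (wreath p) (FW R (Suc n)) = vv (xr r (cshift p (n * snd t) y)) \<star> tp (Suc n)"
    by simp
  have P2: "emb (xr r (cshift p (n * snd t) y)) = (\<Sum>j<Suc n. sh p (j * snd t) (\<Sum>x\<in>{x. (j, x) \<in> R}. emb (yv x)))"
    using r(3) y(3) by (simp add: emb_xr emb_cshift)
  have P3: "sp p (xr r (cshift p (n * snd t) y))" by (rule sp_xr[OF r(1) sp_cshift])
  show ?case by (rule exI[of _ "xr r (cshift p (n * snd t) y)"], intro conjI P1 P2 P3)
qed

end


lemma sum_4: "(\<Sum>j<n. 4 * f j + 1) = 4 * (\<Sum>j<n. f j) + (n::nat)" for f :: "nat \<Rightarrow> nat"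
  by (induction n) simp_all

context wsetup begin

lemma len_cw: "length (concat (map cw xs)) = 4 * length xs"
  by (induction xs) (simp_all add: cw_def)

lemma len_FW: assumes R: "finite R"
  shows "length (FW R n) = (\<Sum>j<n. 4 * card {x. (j, x) \<in> R} + 1)"
proof -
  have "length (Yw R j) = 4 * card {x. (j, x) \<in> R}" for j
  proof -
    have "length (Yw R j) = 4 * length (Lj R j)" unfolding Yw_def by (rule len_cw)
    also have "length (Lj R j) = card {x. (j, x) \<in> R}" using Lj_prop[OF R, of j] distinct_card by metis
    finally show ?thesis .
  qed
  then show ?thesis unfolding FW_def by (induction n) (simp_all add: length_concat)
qed

lemma R_Sigma: "R \<subseteq> {..<p} \<times> X0 \<Longrightarrow> R = Sigma {..<p} (\<lambda>j. {x. (j, x) \<in> R})"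
  by auto

lemma card_R: assumes R: "R \<subseteq> {..<p} \<times> X0" "finite R"
  shows "(\<Sum>j<p. card {x. (j, x) \<in> R}) = card R"
proof -
  have f: "finite {x. (j, x) \<in> R}" for j
  proof -
    have "{x. (j, x) \<in> R} \<subseteq> snd ` R" by force
    then show ?thesis using R(2) finite_subset by blast
  qed
  have "card (Sigma {..<p} (\<lambda>j. {x. (j, x) \<in> R})) = (\<Sum>j<p. card {x. (j, x) \<in> R})"
    using f by (simp add: card_SigmaI)
  then show ?thesis using R_Sigma[OF R(1)] by simp
qed

lemma val_R: assumes R: "R \<subseteq> {..<p} \<times> X0" "finite R"
  shows "val R = (\<Sum>j<p. sh p (j * snd t) (\<Sum>x\<in>{x. (j, x) \<in> R}. emb (yv x)))"
proof -
  have f: "finite {x. (j, x) \<in> R}" for j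
  proof -
    have "{x. (j, x) \<in> R} \<subseteq> snd ` R" by force
    then show ?thesis using R(2) finite_subset by blast
  qed
  have "val R = (\<Sum>(j, x)\<in>Sigma {..<p} (\<lambda>j. {x. (j, x) \<in> R}). sh p (j * snd t) (emb (yv x)))"
    unfolding val_def using R_Sigma[OF R(1)] by simp
  also have "\<dots> = (\<Sum>j<p. \<Sum>x\<in>{x. (j, x) \<in> R}. sh p (j * snd t) (emb (yv x)))"
    using f by (subst sum.Sigma) auto
  also have "\<dots> = (\<Sum>j<p. sh p (j * snd t) (\<Sum>x\<in>{x. (j, x) \<in> R}. emb (yv x)))"
    by (simp add: sh_sum)
  finally show ?thesis .
qed

lemma FW_letters: assumes R: "R \<subseteq> {..<p} \<times> X0" "finite R"
  shows "set (FW R n) \<subseteq> X0 \<union> wi ` X0"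
proof -
  have "set (Yw R j) \<subseteq> X0 \<union> wi ` X0" for j
    unfolding Yw_def using Lj_prop[OF R(2), of j] R(1) tX by (auto simp: cw_def)
  then show ?thesis unfolding FW_def using tX by auto
qed

lemma rep_t: "word_prod (wreath p) (replicate k t) = tp k"
proof (induction k)
  case 0 then show ?case by simp
next
  case (Suc k) then show ?case using monoid.nat_pow_Suc2[OF mon tcar] by simp
qed

lemma emb_zero_iff: "emb u = 0 \<Longrightarrow> u = (\<lambda>i. False)"
  using emb_false emb_inj by metis

lemma emb_ones_iff: "emb u = onesb p \<Longrightarrow> u = (\<lambda>i. i < p)"
  unfolding onesb_def using emb_inj by metis

lemma xr_cancel: "xr (xr a b) b = a" by (auto simp: xr_def)

end

context wgen begin

lemma main_W: assumes g: "g \<in> carrier (wreath p)"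
  shows "\<exists>ws. set ws \<subseteq> X0 \<union> wi ` X0 \<and> length ws \<le> 6 * p - 5 \<and>
     (\<exists>z\<in>group_center (wreath p). g = z \<star> word_prod (wreath p) ws)"
proof -
  interpret W: group "wreath p" by (rule Wg)
  obtain k v where kv: "k < p" "sp p v" "g = vv v \<star> tp k" using decomp[OF g] by blast
  obtain R where R: "finite R" "R \<subseteq> {..<p} \<times> X0" "emb v = val R \<or> emb v = val R + onesb p" "card R \<le> p - 1"
    using small_rep[OF emb_all[OF kv(2)]] by blast
  obtain r where r: "sp p r" "word_prod (wreath p) (FW R p) = vv r \<star> tp p" "emb r = val R"
    using FW_prod[OF R(2,1), of p] val_R[OF R(2,1)] by auto
  define ws where "ws = FW R p @ replicate k t"
  have let1: "set ws \<subseteq> X0 \<union> wi ` X0" unfolding ws_def using FW_letters[OF R(2,1)] tX by auto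
  have "length ws = (\<Sum>j<p. 4 * card {x. (j, x) \<in> R} + 1) + k" unfolding ws_def using len_FW[OF R(1)] by simp
  also have "\<dots> = 4 * card R + p + k" using card_R[OF R(2,1)] by (simp only: sum_4)
  finally have len: "length ws \<le> 6 * p - 5" using R(4) kv(1) p0 by linarith
  obtain w0 where w0: "snd (tp p) = 0" "fst (tp p) = w0" "w0 = (\<lambda>i. False) \<or> w0 = (\<lambda>i. i < p)"
    using pow_p_center[OF pp tcar tc] by blast
  have tpv: "tp p = vv w0" using w0 by (simp add: vv_def prod_eq_iff)
  have sw0: "sp p w0" using w0(3) by (auto simp: sp_def)
  have xic: "X0 \<union> wi ` X0 \<subseteq> carrier (wreath p)" using X0c W.inv_closed by blast
  have fc: "set (FW R p) \<subseteq> carrier (wreath p)" using FW_letters[OF R(2,1)] xic by (rule subset_trans)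
  have "word_prod (wreath p) ws = vv r \<star> tp p \<star> tp k"
  proof -
    have "set (replicate k t) \<subseteq> carrier (wreath p)" using tcar by auto
    then show ?thesis unfolding ws_def using word_prod_append[OF mon fc, of "replicate k t"] r(2) rep_t by simp
  qed
  also have "\<dots> = vv (xr r w0) \<star> tp k" using tpv vv_mult[OF p0 sw0] by simp
  finally have pw: "word_prod (wreath p) ws = vv (xr r w0) \<star> tp k" .
  define zz where "zz = xr v (xr r w0)"
  have "emb zz = (emb v + val R) + emb w0" unfolding zz_def emb_xr r(3) by (simp only: add.assoc)
  moreover have "emb v + val R = 0 \<or> emb v + val R = onesb p"
    using R(3) by (elim disjE) (simp_all add: add.commute[of "val R"] add.assoc)
  moreover have "emb w0 = 0 \<or> emb w0 = onesb p" using w0(3) emb_false by (auto simp: onesb_def)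
  ultimately have "emb zz = 0 \<or> emb zz = onesb p" using bit_eps by metis
  then have zz: "zz = (\<lambda>i. False) \<or> zz = (\<lambda>i. i < p)" using emb_zero_iff emb_ones_iff by blast
  have zc: "vv zz \<in> group_center (wreath p)"
  proof (cases "zz = (\<lambda>i. False)")
    case True
    then have "vv zz = \<one>\<^bsub>wreath p\<^esub>" by (simp add: vv_def wone)
    then show ?thesis using normal_imp_subgroup[OF Znormal[OF p0]] subgroup.one_closed by metis
  next
    case False
    then have "vv zz = onesw p" using zz by (simp add: vv_def onesw_def)
    then show ?thesis using onesw_center[OF p0] by simp
  qed
  have szz: "sp p (xr r w0)" using sp_xr[OF r(1) sw0] .
  have "vv zz \<star> word_prod (wreath p) ws = vv zz \<star> vv (xr r w0) \<star> tp k"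
    unfolding pw using vv_carrier[OF p0] szz tp_car sp_xr kv(2) by (simp add: W.m_assoc zz_def)
  also have "\<dots> = vv v \<star> tp k" using vv_mult[OF p0 szz] by (simp add: zz_def xr_cancel)
  finally have "g = vv zz \<star> word_prod (wreath p) ws" using kv(3) by simp
  then show ?thesis using let1 len zc by blast
qed

end


lemma rcos_mem: "x \<in> H #>\<^bsub>G\<^esub> a \<Longrightarrow> \<exists>h\<in>H. x = h \<otimes>\<^bsub>G\<^esub> a"
  unfolding r_coset_def by blast

context fixes p :: nat assumes pp: "prime p" and po: "odd p"
begin

lemma pq0: "0 < p" using pp prime_gt_0_nat by blast
lemma p3: "3 \<le> p"
proof -
  have "p \<ge> 2" using pp prime_ge_2_nat by blast
  moreover have "p \<noteq> 2" using po by auto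
  ultimately show ?thesis by simp
qed

abbreviation Zc where "Zc \<equiv> group_center (wreath p)"

lemma Zsub: "subgroup Zc (wreath p)" using normal_imp_subgroup[OF Znormal[OF pq0]] .

lemma coset_eq_mem: assumes g: "g \<in> carrier (wreath p)" and k: "k \<in> carrier (wreath p)"
  and e: "Zc #>\<^bsub>wreath p\<^esub> g = Zc #>\<^bsub>wreath p\<^esub> k"
  shows "\<exists>z\<in>Zc. g = z \<otimes>\<^bsub>wreath p\<^esub> k"
proof -
  have "g \<in> Zc #>\<^bsub>wreath p\<^esub> g" using group.rcos_self[OF Wgroup[OF pq0] g Zsub] .
  then show ?thesis using e rcos_mem by metis
qed

lemma cayley_bound:
  assumes S: "S \<subseteq> carrier (Gp p)" and gen: "generate (Gp p) S = carrier (Gp p)"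
  shows "cayley_diam (Gp p) S \<le> 6 * p - 5"
proof -
  interpret W: group "wreath p" by (rule Wgroup[OF pq0])
  have ex_rep: "\<exists>x. x \<in> carrier (wreath p) \<and> s = Zc #>\<^bsub>wreath p\<^esub> x" if "s \<in> S" for s
    using S that unfolding Gp_def carrier_FactGroup by blast
  define rep where "rep s = (SOME x. x \<in> carrier (wreath p) \<and> s = Zc #>\<^bsub>wreath p\<^esub> x)" for s
  have rep: "rep s \<in> carrier (wreath p)" "s = Zc #>\<^bsub>wreath p\<^esub> rep s" if "s \<in> S" for s
    using someI_ex[OF ex_rep[OF that]] unfolding rep_def by blast+
  define X0 where "X0 = rep ` S"
  have X0c: "X0 \<subseteq> carrier (wreath p)" using rep X0_def by blast
  have GEN: "\<exists>z\<in>Zc. \<exists>k\<in>K. g = z \<otimes>\<^bsub>wreath p\<^esub> k"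
    if K: "K \<subseteq> carrier (wreath p)" "\<one>\<^bsub>wreath p\<^esub> \<in> K"
      "\<And>a b. a \<in> K \<Longrightarrow> b \<in> K \<Longrightarrow> a \<otimes>\<^bsub>wreath p\<^esub> b \<in> K"
      "\<And>a. a \<in> K \<Longrightarrow> inv\<^bsub>wreath p\<^esub> a \<in> K" "X0 \<subseteq> K"
      and g: "g \<in> carrier (wreath p)" for K g
  proof -
    have SK: "\<exists>k\<in>K. s = Zc #>\<^bsub>wreath p\<^esub> k" if "s \<in> S" for s
      using rep[OF that] K(5) that X0_def by blast
    have "Zc #>\<^bsub>wreath p\<^esub> g \<in> carrier (Gp p)" unfolding Gp_def carrier_FactGroup using g by blast
    then have "Zc #>\<^bsub>wreath p\<^esub> g \<in> generate (Gp p) S" using gen by simp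
    then obtain k where k: "k \<in> K" "Zc #>\<^bsub>wreath p\<^esub> g = Zc #>\<^bsub>wreath p\<^esub> k"
      using gen_lift[OF pq0 K(1-4) SK] by blast
    then show ?thesis using coset_eq_mem[OF g _ k(2)] K(1) by blast
  qed
  have "\<exists>t\<in>X0. snd t \<noteq> 0"
  proof (rule ccontr)
    assume "\<not> (\<exists>t\<in>X0. snd t \<noteq> 0)"
    then have all0: "\<And>x. x \<in> X0 \<Longrightarrow> snd x = 0" by blast
    define K0 where "K0 = {g \<in> carrier (wreath p). snd g = 0}"
    have k1: "K0 \<subseteq> carrier (wreath p)" unfolding K0_def by blast
    have k2: "\<one>\<^bsub>wreath p\<^esub> \<in> K0" unfolding K0_def using W.one_closed by (simp add: wone)
    have k3: "a \<otimes>\<^bsub>wreath p\<^esub> b \<in> K0" if "a \<in> K0" "b \<in> K0" for a b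
    proof -
      have "snd (a \<otimes>\<^bsub>wreath p\<^esub> b) = 0" using that unfolding K0_def by (simp add: wmult)
      then show ?thesis using that W.m_closed unfolding K0_def by blast
    qed
    have k4: "inv\<^bsub>wreath p\<^esub> a \<in> K0" if "a \<in> K0" for a
    proof -
      have "snd (inv\<^bsub>wreath p\<^esub> a) = 0" using that unfolding K0_def by (simp add: winv[OF pq0])
      then show ?thesis using that W.inv_closed unfolding K0_def by blast
    qed
    have k5: "X0 \<subseteq> K0" unfolding K0_def using X0c all0 by blast
    have g0: "((\<lambda>i. False), 1) \<in> carrier (wreath p)" using p3 by (simp add: wcarrier)
    obtain z k where zk: "z \<in> Zc" "k \<in> K0" "((\<lambda>i. False), 1) = z \<otimes>\<^bsub>wreath p\<^esub> k"
      using GEN[OF k1 k2 k3 k4 k5 g0] by blast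
    have "snd z = 0" using center_snd[OF pq0 zk(1)] .
    then have "snd (z \<otimes>\<^bsub>wreath p\<^esub> k) = 0" using zk(2) unfolding K0_def by (simp add: wmult)
    moreover have "snd (z \<otimes>\<^bsub>wreath p\<^esub> k) = 1" unfolding zk(3)[symmetric] by simp
    ultimately show False by simp
  qed
  then obtain t where t: "t \<in> X0" "snd t \<noteq> 0" by blast
  have ws: "wsetup p X0 t" unfolding wsetup_def using pp po X0c t by (intro conjI) simp_all
  have wg: "wgen p X0 t"
    by (rule wgen.intro[OF ws], rule wgen_axioms.intro, rule GEN)
  have "\<forall>h\<in>carrier (Gp p). \<exists>ws. set ws \<subseteq> S \<union> m_inv (Gp p) ` S \<and> length ws \<le> 6 * p - 5 \<and> h = word_prod (Gp p) ws"
  proof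
    fix h assume "h \<in> carrier (Gp p)"
    then obtain g where g: "g \<in> carrier (wreath p)" "h = Zc #>\<^bsub>wreath p\<^esub> g"
      unfolding Gp_def carrier_FactGroup by blast
    obtain ws z where ws: "set ws \<subseteq> X0 \<union> m_inv (wreath p) ` X0" "length ws \<le> 6 * p - 5" "z \<in> Zc"
      "g = z \<otimes>\<^bsub>wreath p\<^esub> word_prod (wreath p) ws"
      using wgen.main_W[OF wg g(1)] by blast
    have wsc: "set ws \<subseteq> carrier (wreath p)" using ws(1) X0c W.inv_closed by blast
    have pc: "word_prod (wreath p) ws \<in> carrier (wreath p)" using word_prod_carrier[OF W.is_monoid wsc] .
    have zc: "z \<in> carrier (wreath p)" using subgroup.mem_carrier[OF Zsub ws(3)] .
    have "h = (Zc #>\<^bsub>wreath p\<^esub> z) #>\<^bsub>wreath p\<^esub> word_prod (wreath p) ws"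
      using g(2) ws(4) W.coset_mult_assoc[OF subgroup.subset[OF Zsub] zc pc] by simp
    also have "\<dots> = Zc #>\<^bsub>wreath p\<^esub> word_prod (wreath p) ws"
      using W.coset_join2[OF zc Zsub ws(3)] by simp
    also have "\<dots> = word_prod (Gp p) (map (\<lambda>x. Zc #>\<^bsub>wreath p\<^esub> x) ws)"
      using word_lift[OF pq0 wsc] by simp
    finally have hw: "h = word_prod (Gp p) (map (\<lambda>x. Zc #>\<^bsub>wreath p\<^esub> x) ws)" .
    have "set (map (\<lambda>x. Zc #>\<^bsub>wreath p\<^esub> x) ws) \<subseteq> S \<union> m_inv (Gp p) ` S"
    proof
      fix y assume "y \<in> set (map (\<lambda>x. Zc #>\<^bsub>wreath p\<^esub> x) ws)"
      then obtain x where x: "x \<in> set ws" "y = Zc #>\<^bsub>wreath p\<^esub> x" by auto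
      then have "x \<in> X0 \<or> x \<in> m_inv (wreath p) ` X0" using ws(1) by blast
      then show "y \<in> S \<union> m_inv (Gp p) ` S"
      proof
        assume "x \<in> X0"
        then obtain s where s: "s \<in> S" "x = rep s" unfolding X0_def by blast
        have "y = s" unfolding x(2) s(2) by (rule rep(2)[OF s(1), symmetric])
        then show ?thesis using s(1) by blast
      next
        assume "x \<in> m_inv (wreath p) ` X0"
        then obtain s where s: "s \<in> S" "x = m_inv (wreath p) (rep s)" unfolding X0_def by blast
        have sc: "s \<in> carrier (Gp p)" using S s(1) by blast
        have "m_inv (Gp p) s = set_inv\<^bsub>wreath p\<^esub> s"
          using normal.inv_FactGroup[OF Znormal[OF pq0]] sc by (simp add: Gp_def)
        also have "\<dots> = set_inv\<^bsub>wreath p\<^esub> (Zc #>\<^bsub>wreath p\<^esub> rep s)"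
          by (rule arg_cong[where f="\<lambda>A. set_inv\<^bsub>wreath p\<^esub> A"], rule rep(2)[OF s(1)])
        also have "\<dots> = Zc #>\<^bsub>wreath p\<^esub> m_inv (wreath p) (rep s)"
          by (rule normal.rcos_inv[OF Znormal[OF pq0] rep(1)[OF s(1)]])
        finally have "y = m_inv (Gp p) s" using x(2) s(2) by simp
        then show ?thesis using s(1) by blast
      qed
    qed
    then show "\<exists>ws. set ws \<subseteq> S \<union> m_inv (Gp p) ` S \<and> length ws \<le> 6 * p - 5 \<and> h = word_prod (Gp p) ws"
      using hw ws(2) by (intro exI[of _ "map (\<lambda>x. Zc #>\<^bsub>wreath p\<^esub> x) ws"]) simp
  qed
  then show ?thesis unfolding cayley_diam_def by (intro Least_le) blast
qed

lemma diam_bound: "diam_max (Gp p) \<le> 6 * p - 5"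
proof -
  let ?X = "{cayley_diam (Gp p) S | S. S \<subseteq> carrier (Gp p) \<and> generate (Gp p) S = carrier (Gp p)}"
  show ?thesis
  proof (cases "?X = {}")
    case True then show ?thesis unfolding diam_max_def True by simp
  next
    case False
    have "Sup ?X \<le> 6 * p - 5" using False cayley_bound by (intro cSup_least) auto
    then show ?thesis unfolding diam_max_def .
  qed
qed

end

theorem theorem4:
  fixes p :: nat
  assumes "prime p" and "odd p"
  shows "real (diam_max (Gp p)) \<le> 13 / 2 * (real p - 1)"
proof -
  have d: "diam_max (Gp p) \<le> 6 * p - 5" using diam_bound[OF assms] .
  have p3: "3 \<le> p" using p3[OF assms] .
  have "real (diam_max (Gp p)) \<le> real (6 * p - 5)" using d by simp
  also have "\<dots> = 6 * real p - 5" using p3 by (simp add: of_nat_diff)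
  also have "\<dots> \<le> 13 / 2 * (real p - 1)" using p3 by simp
  finally show ?thesis .
qed


end
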